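(* Let $R$ be a commutative ring with ${\rm char}(R)\neq 2$ and $R_2\neq\{0\}$. Let $G$ be a non-abelian group and $\varphi$ an involution on $G$. Then $(RG)^-_\varphi$ is commutative if and only if one of the following holds: \begin{enumerate} \item[(a)] $K=\langle g\in G\mid g\notin G_\varphi\rangle$ is abelian (and thus $G=K\cup Kx$ with $x\in G_\varphi$ and $\varphi(k)=xkx^{-1}$ for all $k\in K$), and $R_2^2=\{0\}$; \item[(b)] ${\rm char}(R)=4$, $|G'|=2$, $G/G'=(G/G')_\varphi$, $g^2\in G_\varphi$ for all $g\in G$, and $G_\varphi$ is commutative in case $R_2^2\neq\{0\}$. \end{enumerate}
   Context: An involution on a group $G$ is a map $\varphi:G\to G$ with $\varphi(gh)=\varphi(h)\varphi(g)$ and $\varphi^2=\mathrm{id}$, extended $R$-linearly to $RG$. $G_\varphi=\{g\in G\mid\varphi(g)=g\}$; $(RG)^-_\varphi=\{\alpha\in RG\mid\varphi(\alpha)=-\alpha\}$; $R_2=\{r\in R\mid 2r=0\}$; $R_2^2=\{0\}$ means $r_1r_2=0$ for all $r_1,r_2\in R_2$. $G'$ is the commutator subgroup; $G/G'=(G/G')_\varphi$ means $\varphi(g)G'=gG'$ for all $g\in G$. "$G_\varphi$ is commutative" means any two elements of $G_\varphi$ commute. *)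

theory Defs
  imports "HOL-Algebra.Algebra"
begin

definition grp_involution :: "('g, 'b) monoid_scheme \<Rightarrow> ('g \<Rightarrow> 'g) \<Rightarrow> bool" where
  "grp_involution G \<phi> \<longleftrightarrow>
     \<phi> \<in> carrier G \<rightarrow> carrier G \<and>
     (\<forall>g\<in>carrier G. \<forall>h\<in>carrier G. \<phi> (g \<otimes>\<^bsub>G\<^esub> h) = \<phi> h \<otimes>\<^bsub>G\<^esub> \<phi> g) \<and>
     (\<forall>g\<in>carrier G. \<phi> (\<phi> g) = g)"

definition fixed_set :: "('g, 'b) monoid_scheme \<Rightarrow> ('g \<Rightarrow> 'g) \<Rightarrow> 'g set" where
  "fixed_set G \<phi> = {g \<in> carrier G. \<phi> g = g}"

definition grp_ring :: "('g, 'b) monoid_scheme \<Rightarrow> ('g \<Rightarrow> 'r::comm_ring_1) set" where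
  "grp_ring G = {\<alpha>. finite {g. \<alpha> g \<noteq> 0} \<and> (\<forall>g. \<alpha> g \<noteq> 0 \<longrightarrow> g \<in> carrier G)}"

definition grp_ring_mult :: "('g, 'b) monoid_scheme \<Rightarrow> ('g \<Rightarrow> 'r::comm_ring_1) \<Rightarrow> ('g \<Rightarrow> 'r) \<Rightarrow> ('g \<Rightarrow> 'r)" where
  "grp_ring_mult G \<alpha> \<beta> = (\<lambda>g. if g \<in> carrier G
      then (\<Sum>h \<in> {h. \<alpha> h \<noteq> 0}. \<alpha> h * \<beta> (inv\<^bsub>G\<^esub> h \<otimes>\<^bsub>G\<^esub> g)) else 0)"

text \<open>R-linear extension of phi to RG: phi(sum a_g g) = sum a_g phi(g); since phi is
  an involution, the coefficient at g is a_(phi g).\<close>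
definition grp_ring_inv :: "('g, 'b) monoid_scheme \<Rightarrow> ('g \<Rightarrow> 'g) \<Rightarrow> ('g \<Rightarrow> 'r::comm_ring_1) \<Rightarrow> ('g \<Rightarrow> 'r)" where
  "grp_ring_inv G \<phi> \<alpha> = (\<lambda>g. if g \<in> carrier G then \<alpha> (\<phi> g) else 0)"

definition skew_elems :: "('g, 'b) monoid_scheme \<Rightarrow> ('g \<Rightarrow> 'g) \<Rightarrow> ('g \<Rightarrow> 'r::comm_ring_1) set" where
  "skew_elems G \<phi> = {\<alpha> \<in> grp_ring G. grp_ring_inv G \<phi> \<alpha> = - \<alpha>}"

definition R2 :: "'r::comm_ring_1 set" where
  "R2 = {r. 2 * r = 0}"

end

theory Submission
  imports Defs "HOL-Library.Function_Algebras"
begin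

definition lin :: "('r::comm_ring_1 \<times> 'g) list \<Rightarrow> 'g \<Rightarrow> 'r" where
  "lin xs = (\<lambda>z. sum_list (map (\<lambda>(a,g). if g = z then a else 0) xs))"

definition prodl :: "('g, 'b) monoid_scheme \<Rightarrow> ('r::comm_ring_1 \<times> 'g) list \<Rightarrow> ('r \<times> 'g) list \<Rightarrow> ('r \<times> 'g) list" where
  "prodl G xs ys = concat (map (\<lambda>(a,g). map (\<lambda>(b,h). (a*b, g \<otimes>\<^bsub>G\<^esub> h)) ys) xs)"

lemma lin_Nil[simp]: "lin [] = 0"
  by (simp add: lin_def fun_eq_iff)

lemma lin_Cons: "lin ((a,g)#xs) = (\<lambda>z. if g = z then a else 0) + lin xs"
  by (simp add: lin_def fun_eq_iff)

lemma lin_append: "lin (xs @ ys) = lin xs + lin ys"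
  by (simp add: lin_def fun_eq_iff)

lemma lin_app: "lin xs z = sum_list (map (\<lambda>(a,g). if g = z then a else 0) xs)"
  by (simp add: lin_def)

lemma lin_supp: "{z. lin xs z \<noteq> 0} \<subseteq> snd ` set xs"
proof (induction xs)
  case Nil then show ?case by simp
next
  case (Cons x xs) then show ?case
    by (cases x) (auto simp: lin_Cons split: if_splits)
qed

lemma lin_grp_ring: "snd ` set xs \<subseteq> carrier G \<Longrightarrow> lin xs \<in> grp_ring G"
  unfolding grp_ring_def using lin_supp[of xs] finite_subset[OF lin_supp[of xs]] by auto

lemma single_grp_ring: "g \<in> carrier G \<Longrightarrow> (\<lambda>z. if g = z then (a::'r::comm_ring_1) else 0) \<in> grp_ring G"
  unfolding grp_ring_def by (auto intro: finite_subset[of _ "{g}"])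

lemma zero_grp_ring: "0 \<in> grp_ring G"
  unfolding grp_ring_def by auto

lemma add_grp_ring: "\<alpha> \<in> grp_ring G \<Longrightarrow> \<beta> \<in> grp_ring G \<Longrightarrow> \<alpha> + \<beta> \<in> grp_ring G"
proof -
  assume a: "\<alpha> \<in> grp_ring G" "\<beta> \<in> grp_ring G"
  have s: "{g. (\<alpha> + \<beta>) g \<noteq> 0} \<subseteq> {g. \<alpha> g \<noteq> 0} \<union> {g. \<beta> g \<noteq> 0}" by auto
  have f: "finite {g. (\<alpha> + \<beta>) g \<noteq> 0}"
    by (rule finite_subset[OF s]) (use a in \<open>auto simp: grp_ring_def\<close>)
  have c: "\<forall>g. (\<alpha> + \<beta>) g \<noteq> 0 \<longrightarrow> g \<in> carrier G"
  proof (intro allI impI)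
    fix g assume "(\<alpha> + \<beta>) g \<noteq> 0"
    then have "\<alpha> g \<noteq> 0 \<or> \<beta> g \<noteq> 0" by auto
    then show "g \<in> carrier G" using a unfolding grp_ring_def by auto
  qed
  show ?thesis using f c unfolding grp_ring_def by blast
qed

lemma mult_supp:
  assumes "finite F" "{h. \<alpha> h \<noteq> 0} \<subseteq> F"
  shows "grp_ring_mult G \<alpha> \<beta> = (\<lambda>g. if g \<in> carrier G then \<Sum>h\<in>F. \<alpha> h * \<beta> (inv\<^bsub>G\<^esub> h \<otimes>\<^bsub>G\<^esub> g) else 0)"
  unfolding grp_ring_mult_def
  by (intro ext if_cong refl sum.mono_neutral_left assms) auto

lemma mult_add_left:
  assumes "\<alpha> \<in> grp_ring G" "\<beta> \<in> grp_ring G"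
  shows "grp_ring_mult G (\<alpha> + \<beta>) \<gamma> = grp_ring_mult G \<alpha> \<gamma> + grp_ring_mult G \<beta> \<gamma>"
proof -
  let ?F = "{h. \<alpha> h \<noteq> 0} \<union> {h. \<beta> h \<noteq> 0}"
  have f: "finite ?F" using assms unfolding grp_ring_def by auto
  show ?thesis
    apply (subst mult_supp[OF f, of "\<alpha>+\<beta>"], force)
    apply (subst mult_supp[OF f, of "\<alpha>"], force)
    apply (subst mult_supp[OF f, of "\<beta>"], force)
    by (simp add: fun_eq_iff sum.distrib distrib_right)
qed

lemma mult_add_right:
  "grp_ring_mult G \<alpha> (\<beta> + \<gamma>) = grp_ring_mult G \<alpha> \<beta> + grp_ring_mult G \<alpha> \<gamma>"
  unfolding grp_ring_mult_def by (simp add: fun_eq_iff sum.distrib distrib_left)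

lemma mult_zero_left[simp]: "grp_ring_mult G 0 \<beta> = 0"
  unfolding grp_ring_mult_def by (simp add: fun_eq_iff)

lemma mult_zero_right[simp]: "grp_ring_mult G \<alpha> 0 = 0"
  unfolding grp_ring_mult_def by (simp add: fun_eq_iff)

lemma mult_zero_left'[simp]: "grp_ring_mult G (\<lambda>_. 0) \<beta> = 0"
  unfolding grp_ring_mult_def by (simp add: fun_eq_iff)

lemma mult_zero_right'[simp]: "grp_ring_mult G \<alpha> (\<lambda>_. 0) = 0"
  unfolding grp_ring_mult_def by (simp add: fun_eq_iff)

lemma mult_single:
  assumes "group G" "a \<in> carrier G" "b \<in> carrier G"
  shows "grp_ring_mult G (\<lambda>z. if a = z then (r::'r::comm_ring_1) else 0) (\<lambda>z. if b = z then s else 0)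
       = (\<lambda>z. if a \<otimes>\<^bsub>G\<^esub> b = z then r * s else 0)"
proof -
  interpret group G by fact
  have e: "grp_ring_mult G (\<lambda>z. if a = z then (r::'r::comm_ring_1) else 0) (\<lambda>z. if b = z then s else 0)
     = (\<lambda>g. if g \<in> carrier G then \<Sum>h\<in>{a}. (if a = h then r else 0) * (if b = inv\<^bsub>G\<^esub> h \<otimes>\<^bsub>G\<^esub> g then s else 0) else 0)"
    by (rule mult_supp) auto
  have k: "\<And>g. g \<in> carrier G \<Longrightarrow> (b = inv\<^bsub>G\<^esub> a \<otimes>\<^bsub>G\<^esub> g) = (a \<otimes>\<^bsub>G\<^esub> b = g)"
    using assms inv_solve_left[of b a] by auto
  have k2: "\<And>g. g \<notin> carrier G \<Longrightarrow> a \<otimes>\<^bsub>G\<^esub> b \<noteq> g"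
    using assms by auto
  show ?thesis unfolding e
  proof (rule ext)
    fix g show "(if g \<in> carrier G then \<Sum>h\<in>{a}. (if a = h then r else 0) * (if b = inv\<^bsub>G\<^esub> h \<otimes>\<^bsub>G\<^esub> g then s else 0) else 0)
       = (if a \<otimes>\<^bsub>G\<^esub> b = g then r * s else 0)"
      using k[of g] k2[of g] by (cases "g \<in> carrier G") auto
  qed
qed

lemma mult_single_lin:
  assumes "group G" "a \<in> carrier G" "snd ` set ys \<subseteq> carrier G"
  shows "grp_ring_mult G (\<lambda>z. if a = z then (r::'r::comm_ring_1) else 0) (lin ys)
       = lin (map (\<lambda>(b,h). (r*b, a \<otimes>\<^bsub>G\<^esub> h)) ys)"
  using assms(3)
proof (induction ys)
  case Nil then show ?case by simp
next
  case (Cons y ys)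
  obtain b h where y: "y = (b,h)" by force
  have l: "lin (y#ys) = (\<lambda>z. if h = z then b else 0) + lin ys" by (simp only: y lin_Cons)
  have h: "h \<in> carrier G" using Cons.prems y by auto
  have IH: "grp_ring_mult G (\<lambda>z. if a = z then r else 0) (lin ys) = lin (map (\<lambda>(b,h). (r*b, a \<otimes>\<^bsub>G\<^esub> h)) ys)"
    using Cons by auto
  have r: "lin (map (\<lambda>(b,h). (r*b, a \<otimes>\<^bsub>G\<^esub> h)) (y#ys)) = (\<lambda>z. if a \<otimes>\<^bsub>G\<^esub> h = z then r*b else 0) + lin (map (\<lambda>(b,h). (r*b, a \<otimes>\<^bsub>G\<^esub> h)) ys)"
    by (simp only: y list.map prod.case lin_Cons)
  show ?case unfolding l mult_add_right r IH mult_single[OF assms(1,2) h] ..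
qed

lemma mult_lin:
  assumes "group G" "snd ` set xs \<subseteq> carrier G" "snd ` set ys \<subseteq> carrier G"
  shows "grp_ring_mult G (lin xs) (lin (ys::('r::comm_ring_1 \<times> _) list)) = lin (prodl G xs ys)"
  using assms(2)
proof (induction xs)
  case Nil then show ?case by (simp add: prodl_def)
next
  case (Cons x xs)
  obtain a g where x: "x = (a,g)" by force
  have l: "lin (x#xs) = (\<lambda>z. if g = z then a else 0) + lin xs" by (simp only: x lin_Cons)
  have g: "g \<in> carrier G" using Cons.prems x by auto
  have IH: "grp_ring_mult G (lin xs) (lin ys) = lin (prodl G xs ys)" using Cons by auto
  have "grp_ring_mult G (lin (x#xs)) (lin ys) =
     grp_ring_mult G (\<lambda>z. if g = z then a else 0) (lin ys) + grp_ring_mult G (lin xs) (lin ys)"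
    unfolding l using Cons.prems x
    by (intro mult_add_left single_grp_ring lin_grp_ring) auto
  also have "\<dots> = lin (map (\<lambda>(b,h). (a*b, g \<otimes>\<^bsub>G\<^esub> h)) ys) + lin (prodl G xs ys)"
    unfolding IH mult_single_lin[OF assms(1) g assms(3)] ..
  also have "\<dots> = lin (prodl G (x#xs) ys)"
    by (simp only: x prodl_def list.map prod.case concat.simps lin_append)
  finally show ?case .
qed

inductive_set span_of :: "('a::ab_group_add) set \<Rightarrow> 'a set" for A where
  span_zero: "0 \<in> span_of A"
| span_add: "a \<in> A \<Longrightarrow> b \<in> span_of A \<Longrightarrow> a + b \<in> span_of A"

lemma span_grp_ring: assumes "A \<subseteq> grp_ring G" "\<alpha> \<in> span_of A" shows "\<alpha> \<in> grp_ring G"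
  using assms(2)
proof (induction rule: span_of.induct)
  case span_zero show ?case by (rule zero_grp_ring)
next
  case (span_add a b) then show ?case using assms(1) by (intro add_grp_ring) auto
qed

lemma span_comm:
  assumes A: "A \<subseteq> grp_ring G" and C: "\<forall>a\<in>A. \<forall>b\<in>A. grp_ring_mult G a b = grp_ring_mult G b a"
    and "\<alpha> \<in> span_of A" "\<beta> \<in> span_of A"
  shows "grp_ring_mult G \<alpha> \<beta> = grp_ring_mult G \<beta> (\<alpha> :: _ \<Rightarrow> 'r::comm_ring_1)"
proof -
  have 1: "\<forall>a\<in>A. grp_ring_mult G a \<beta> = grp_ring_mult G \<beta> a" if "\<beta> \<in> span_of A" for \<beta>
    using that
  proof (induction rule: span_of.induct)
    case span_zero then show ?case by (simp only: mult_zero_left mult_zero_right) simp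
  next
    case (span_add b \<beta>)
    have bg: "b \<in> grp_ring G" "\<beta> \<in> grp_ring G" using span_add A span_grp_ring by auto
    show ?case
    proof
      fix a assume a: "a \<in> A"
      show "grp_ring_mult G a (b + \<beta>) = grp_ring_mult G (b + \<beta>) a"
        unfolding mult_add_right mult_add_left[OF bg]
        using span_add a C by metis
    qed
  qed
  show ?thesis using assms(3)
  proof (induction rule: span_of.induct)
    case span_zero then show ?case by (simp only: mult_zero_left mult_zero_right)
  next
    case (span_add a \<alpha>)
    have ag: "a \<in> grp_ring G" "\<alpha> \<in> grp_ring G" using span_add A span_grp_ring by auto
    show ?case
      unfolding mult_add_right mult_add_left[OF ag]
      using span_add 1[OF assms(4)] by metis
  qed
qed

lemma neg_self_R2:
  assumes h: "(s::'r::comm_ring_1) = - s" shows "s \<in> R2"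
proof -
  have "s + s = - s + s" using h by (rule arg_cong[where f="\<lambda>x. x + s"])
  then have "s + s = 0" by (simp only: left_minus)
  then show ?thesis unfolding R2_def mem_Collect_eq mult_2 .
qed

lemma R2_neg_self:
  assumes h: "(s::'r::comm_ring_1) \<in> R2" shows "s = - s"
proof -
  have "s + s = 0" using h unfolding R2_def mem_Collect_eq mult_2 .
  then show ?thesis by (simp only: eq_neg_iff_add_eq_0)
qed

definition ind :: "'g \<Rightarrow> 'g \<Rightarrow> 'r::comm_ring_1" where
  "ind a z = (if a = z then 1 else 0)"

lemma lin_app_ind: "lin xs z = sum_list (map (\<lambda>(a,g). a * ind g z) xs)"
  unfolding lin_app ind_def by (induction xs) auto

locale invo = group G for G (structure) +
  fixes \<phi> :: "'a \<Rightarrow> 'a"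
  assumes invo: "grp_involution G \<phi>"
begin

lemma phi_closed[simp]: "g \<in> carrier G \<Longrightarrow> \<phi> g \<in> carrier G"
  using invo unfolding grp_involution_def by auto

lemma phi_mult: "g \<in> carrier G \<Longrightarrow> h \<in> carrier G \<Longrightarrow> \<phi> (g \<otimes> h) = \<phi> h \<otimes> \<phi> g"
  using invo unfolding grp_involution_def by auto

lemma phi_phi[simp]: "g \<in> carrier G \<Longrightarrow> \<phi> (\<phi> g) = g"
  using invo unfolding grp_involution_def by auto

lemma phi_eq_iff: "a \<in> carrier G \<Longrightarrow> b \<in> carrier G \<Longrightarrow> (\<phi> a = b) = (a = \<phi> b)"
  by (metis phi_phi)

lemma phi_inj: "a \<in> carrier G \<Longrightarrow> b \<in> carrier G \<Longrightarrow> (\<phi> a = \<phi> b) = (a = b)"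
  by (metis phi_phi)

lemma phi_one[simp]: "\<phi> \<one> = \<one>"
proof -
  have "\<phi> \<one> \<otimes> \<phi> \<one> = \<phi> \<one> \<otimes> \<one>" using phi_mult[of \<one> \<one>] by simp
  then show ?thesis using l_cancel by (metis one_closed phi_closed)
qed

lemma phi_inv: "g \<in> carrier G \<Longrightarrow> \<phi> (inv g) = inv (\<phi> g)"
proof -
  assume g: "g \<in> carrier G"
  have "\<phi> (inv g) \<otimes> \<phi> g = \<one>" using phi_mult[of g "inv g"] g by simp
  then show ?thesis using g by (intro inv_equality[symmetric]) auto
qed

definition NN where "NN = {g \<in> carrier G. \<phi> g \<noteq> g}"
abbreviation SS where "SS \<equiv> fixed_set G \<phi>"

lemma skew_iff: "\<alpha> \<in> skew_elems G \<phi> \<longleftrightarrow> \<alpha> \<in> grp_ring G \<and> (\<forall>z\<in>carrier G. \<alpha> (\<phi> z) = - \<alpha> z)"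
proof
  assume a: "\<alpha> \<in> skew_elems G \<phi>"
  show "\<alpha> \<in> grp_ring G \<and> (\<forall>z\<in>carrier G. \<alpha> (\<phi> z) = - \<alpha> z)"
  proof (intro conjI ballI)
    show "\<alpha> \<in> grp_ring G" using a unfolding skew_elems_def by auto
    fix z assume z: "z \<in> carrier G"
    have "grp_ring_inv G \<phi> \<alpha> = - \<alpha>" using a unfolding skew_elems_def by auto
    then have "grp_ring_inv G \<phi> \<alpha> z = (- \<alpha>) z" by (rule fun_cong)
    then show "\<alpha> (\<phi> z) = - \<alpha> z" using z unfolding grp_ring_inv_def by simp
  qed
next
  assume a: "\<alpha> \<in> grp_ring G \<and> (\<forall>z\<in>carrier G. \<alpha> (\<phi> z) = - \<alpha> z)"
  have "grp_ring_inv G \<phi> \<alpha> = - \<alpha>"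
  proof (rule ext)
    fix z show "grp_ring_inv G \<phi> \<alpha> z = (- \<alpha>) z"
    proof (cases "z \<in> carrier G")
      case True then show ?thesis using a unfolding grp_ring_inv_def by simp
    next
      case False
      then have "\<alpha> z = 0" using a unfolding grp_ring_def by auto
      then show ?thesis using False unfolding grp_ring_inv_def by simp
    qed
  qed
  then show "\<alpha> \<in> skew_elems G \<phi>" using a unfolding skew_elems_def by auto
qed

lemma skew_gN:
  assumes g: "g \<in> carrier G"
  shows "lin [(r::'r::comm_ring_1, g), (-r, \<phi> g)] \<in> skew_elems G \<phi>"
  unfolding skew_iff
proof (intro conjI ballI)
  show "lin [(r, g), (-r, \<phi> g)] \<in> grp_ring G" using g by (intro lin_grp_ring) auto
  fix z assume z: "z \<in> carrier G"
  have e1: "(g = \<phi> z) = (\<phi> g = z)" using phi_eq_iff[OF g z] phi_eq_iff[OF z g] by metis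
  have e2: "(\<phi> g = \<phi> z) = (g = z)" using phi_inj[OF g z] .
  show "lin [(r, g), (-r, \<phi> g)] (\<phi> z) = - lin [(r, g), (-r, \<phi> g)] z"
    unfolding lin_app using e1 e2 by auto
qed

lemma skew_gS:
  assumes x: "x \<in> SS" and s: "s \<in> R2"
  shows "lin [(s::'r::comm_ring_1, x)] \<in> skew_elems G \<phi>"
  unfolding skew_iff
proof (intro conjI ballI)
  have xc: "x \<in> carrier G" "\<phi> x = x" using x unfolding fixed_set_def by auto
  show "lin [(s, x)] \<in> grp_ring G" using xc by (intro lin_grp_ring) auto
  fix z assume z: "z \<in> carrier G"
  have e1: "(x = \<phi> z) = (x = z)" using phi_eq_iff[OF xc(1) z] xc by metis
  have "s = - s" using s by (rule R2_neg_self)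
  then show "lin [(s, x)] (\<phi> z) = - lin [(s, x)] z"
    unfolding lin_app using e1 by auto
qed

definition Gens :: "('a \<Rightarrow> 'r::comm_ring_1) set" where
  "Gens = {lin [(r, g), (-r, \<phi> g)] | r g. g \<in> NN} \<union> {lin [(s, x)] | s x. x \<in> SS \<and> s \<in> R2}"

lemma Gens_grp_ring: "Gens \<subseteq> grp_ring G"
  unfolding Gens_def NN_def fixed_set_def by (auto intro!: lin_grp_ring)

lemma grp_ring_diff: "\<alpha> \<in> grp_ring G \<Longrightarrow> \<beta> \<in> grp_ring G \<Longrightarrow> \<alpha> - \<beta> \<in> grp_ring G"
proof -
  assume a: "\<alpha> \<in> grp_ring G" "\<beta> \<in> grp_ring G"
  have s: "{g. (\<alpha> - \<beta>) g \<noteq> 0} \<subseteq> {g. \<alpha> g \<noteq> 0} \<union> {g. \<beta> g \<noteq> 0}" by auto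
  have f: "finite {g. (\<alpha> - \<beta>) g \<noteq> 0}"
    by (rule finite_subset[OF s]) (use a in \<open>auto simp: grp_ring_def\<close>)
  have c: "\<forall>g. (\<alpha> - \<beta>) g \<noteq> 0 \<longrightarrow> g \<in> carrier G"
  proof (intro allI impI)
    fix g assume "(\<alpha> - \<beta>) g \<noteq> 0"
    then have "\<alpha> g \<noteq> 0 \<or> \<beta> g \<noteq> 0" by auto
    then show "g \<in> carrier G" using a unfolding grp_ring_def by auto
  qed
  show ?thesis using f c unfolding grp_ring_def by blast
qed

lemma skew_diff: "\<alpha> \<in> skew_elems G \<phi> \<Longrightarrow> \<beta> \<in> skew_elems G \<phi> \<Longrightarrow> \<alpha> - \<beta> \<in> skew_elems G \<phi>"
  unfolding skew_iff using grp_ring_diff by auto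

lemma skew_span:
  assumes "\<alpha> \<in> skew_elems G \<phi>"
  shows "(\<alpha> :: 'a \<Rightarrow> 'r::comm_ring_1) \<in> span_of Gens"
  using assms
proof (induction "card {g. \<alpha> g \<noteq> 0}" arbitrary: \<alpha> rule: less_induct)
  case less
  have ar: "\<alpha> \<in> grp_ring G" and sk: "\<forall>z\<in>carrier G. \<alpha> (\<phi> z) = - \<alpha> z"
    using less.prems unfolding skew_iff by auto
  have fin: "finite {g. \<alpha> g \<noteq> 0}" and car: "\<And>g. \<alpha> g \<noteq> 0 \<Longrightarrow> g \<in> carrier G"
    using ar unfolding grp_ring_def by auto
  show ?case
  proof (cases "{g. \<alpha> g \<noteq> 0} = {}")
    case True
    then have "\<alpha> = 0" by (auto simp: fun_eq_iff)
    then show ?thesis by (simp add: span_zero)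
  next
    case False
    then obtain g where ag: "\<alpha> g \<noteq> 0" by auto
    have gc: "g \<in> carrier G" using car[OF ag] .
    show ?thesis
    proof (cases "\<phi> g = g")
      case True
      let ?s = "\<alpha> g"
      have "?s = - ?s" using sk gc True by metis
      then have sR: "?s \<in> R2" by (rule neg_self_R2)
      have gS: "g \<in> SS" using gc True unfolding fixed_set_def by auto
      let ?\<beta> = "\<alpha> - lin [(?s, g)]"
      have bs: "?\<beta> \<in> skew_elems G \<phi>" using skew_diff[OF less.prems skew_gS[OF gS sR]] .
      have sub: "{z. ?\<beta> z \<noteq> 0} \<subseteq> {z. \<alpha> z \<noteq> 0} - {g}" by (auto simp: lin_app split: if_splits)
      have "card {z. ?\<beta> z \<noteq> 0} < card {g. \<alpha> g \<noteq> 0}"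
      proof -
        have "card {z. ?\<beta> z \<noteq> 0} \<le> card ({z. \<alpha> z \<noteq> 0} - {g})"
          using fin sub by (intro card_mono) auto
        also have "\<dots> < card {g. \<alpha> g \<noteq> 0}"
          using fin ag by (intro card_Diff1_less) auto
        finally show ?thesis .
      qed
      then have "?\<beta> \<in> span_of Gens" using less.hyps bs by blast
      moreover have "lin [(?s, g)] \<in> Gens" unfolding Gens_def using gS sR by blast
      ultimately have "lin [(?s, g)] + ?\<beta> \<in> span_of Gens" by (intro span_add)
      then show ?thesis by simp
    next
      case False
      let ?r = "\<alpha> g"
      have gN: "g \<in> NN" using gc False unfolding NN_def by auto
      let ?\<beta> = "\<alpha> - lin [(?r, g), (-?r, \<phi> g)]"
      have bs: "?\<beta> \<in> skew_elems G \<phi>" using skew_diff[OF less.prems skew_gN[OF gc]] .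
      have aphi: "\<alpha> (\<phi> g) = - ?r" using sk gc by auto
      have sub: "{z. ?\<beta> z \<noteq> 0} \<subseteq> {z. \<alpha> z \<noteq> 0} - {g}"
        using False aphi by (auto simp: lin_app split: if_splits)
      have "card {z. ?\<beta> z \<noteq> 0} < card {g. \<alpha> g \<noteq> 0}"
      proof -
        have "card {z. ?\<beta> z \<noteq> 0} \<le> card ({z. \<alpha> z \<noteq> 0} - {g})"
          using fin sub by (intro card_mono) auto
        also have "\<dots> < card {g. \<alpha> g \<noteq> 0}"
          using fin ag by (intro card_Diff1_less) auto
        finally show ?thesis .
      qed
      then have "?\<beta> \<in> span_of Gens" using less.hyps bs by blast
      moreover have "lin [(?r, g), (-?r, \<phi> g)] \<in> Gens" unfolding Gens_def using gN by blast
      ultimately have "lin [(?r, g), (-?r, \<phi> g)] + ?\<beta> \<in> span_of Gens" by (intro span_add)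
      then show ?thesis by simp
    qed
  qed
qed

end

context invo
begin

lemma NN_carrier: "g \<in> NN \<Longrightarrow> g \<in> carrier G" unfolding NN_def by auto
lemma NN_phi: "g \<in> NN \<Longrightarrow> \<phi> g \<noteq> g" unfolding NN_def by auto
lemma SS_carrier: "x \<in> SS \<Longrightarrow> x \<in> carrier G" unfolding fixed_set_def by auto
lemma SS_phi: "x \<in> SS \<Longrightarrow> \<phi> x = x" unfolding fixed_set_def by auto

lemma prod_NN:
  assumes "g \<in> carrier G" "h \<in> carrier G"
  shows "grp_ring_mult G (lin [(r, g), (-r, \<phi> g)]) (lin [(t, h), (-t, \<phi> h)]) z
     = r * t * (ind (g \<otimes> h) z - ind (g \<otimes> \<phi> h) z - ind (\<phi> g \<otimes> h) z + ind (\<phi> g \<otimes> \<phi> h) z :: 'r::comm_ring_1)"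
  using assms by (simp add: mult_lin lin_app_ind prodl_def algebra_simps)

lemma prod_NS:
  assumes "g \<in> carrier G" "x \<in> carrier G"
  shows "grp_ring_mult G (lin [(r, g), (-r, \<phi> g)]) (lin [(s, x)]) z
     = r * s * (ind (g \<otimes> x) z - ind (\<phi> g \<otimes> x) z :: 'r::comm_ring_1)"
  using assms by (simp add: mult_lin lin_app_ind prodl_def algebra_simps)

lemma prod_SN:
  assumes "g \<in> carrier G" "x \<in> carrier G"
  shows "grp_ring_mult G (lin [(s, x)]) (lin [(r, g), (-r, \<phi> g)]) z
     = r * s * (ind (x \<otimes> g) z - ind (x \<otimes> \<phi> g) z :: 'r::comm_ring_1)"
  using assms by (simp add: mult_lin lin_app_ind prodl_def algebra_simps)

lemma prod_SS:
  assumes "x \<in> carrier G" "y \<in> carrier G"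
  shows "grp_ring_mult G (lin [(s, x)]) (lin [(t, y)]) z = s * t * (ind (x \<otimes> y) z :: 'r::comm_ring_1)"
  using assms by (simp add: mult_lin lin_app_ind prodl_def algebra_simps)

lemma comm_iff:
  "(\<forall>\<alpha> \<in> (skew_elems G \<phi> :: ('a \<Rightarrow> 'r::comm_ring_1) set). \<forall>\<beta> \<in> skew_elems G \<phi>.
      grp_ring_mult G \<alpha> \<beta> = grp_ring_mult G \<beta> \<alpha>)
   \<longleftrightarrow>
   (\<forall>g\<in>NN. \<forall>h\<in>NN. \<forall>z. ind (g \<otimes> h) z - ind (g \<otimes> \<phi> h) z - ind (\<phi> g \<otimes> h) z + ind (\<phi> g \<otimes> \<phi> h) z
        = (ind (h \<otimes> g) z - ind (h \<otimes> \<phi> g) z - ind (\<phi> h \<otimes> g) z + ind (\<phi> h \<otimes> \<phi> g) z :: 'r))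
   \<and> (\<forall>x\<in>SS. \<forall>k\<in>NN. \<forall>s\<in>(R2::'r set). \<forall>z. s * (ind (x \<otimes> k) z - ind (x \<otimes> \<phi> k) z)
        = s * (ind (k \<otimes> x) z - ind (\<phi> k \<otimes> x) z))
   \<and> (\<forall>x\<in>SS. \<forall>y\<in>SS. \<forall>s\<in>(R2::'r set). \<forall>t\<in>R2. \<forall>z. s * t * ind (x \<otimes> y) z = s * t * ind (y \<otimes> x) z)"
  (is "?L \<longleftrightarrow> ?A \<and> ?B \<and> ?C")
proof
  assume L: ?L
  have A: ?A
  proof (intro ballI allI)
    fix g h z assume g: "g \<in> NN" and h: "h \<in> NN"
    have gc: "g \<in> carrier G" and hc: "h \<in> carrier G" using g h NN_carrier by auto
    have "grp_ring_mult G (lin [(1::'r, g), (-1, \<phi> g)]) (lin [(1, h), (-1, \<phi> h)]) z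
        = grp_ring_mult G (lin [(1::'r, h), (-1, \<phi> h)]) (lin [(1, g), (-1, \<phi> g)]) z"
      using L skew_gN[OF gc, of 1] skew_gN[OF hc, of 1] by metis
    then show "ind (g \<otimes> h) z - ind (g \<otimes> \<phi> h) z - ind (\<phi> g \<otimes> h) z + ind (\<phi> g \<otimes> \<phi> h) z
        = (ind (h \<otimes> g) z - ind (h \<otimes> \<phi> g) z - ind (\<phi> h \<otimes> g) z + ind (\<phi> h \<otimes> \<phi> g) z :: 'r)"
      unfolding prod_NN[OF gc hc] prod_NN[OF hc gc] by simp
  qed
  have B: ?B
  proof (intro ballI allI)
    fix x k s z assume x: "x \<in> SS" and k: "k \<in> NN" and s: "s \<in> (R2::'r set)"
    have xc: "x \<in> carrier G" and kc: "k \<in> carrier G" using x k NN_carrier SS_carrier by auto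
    have "grp_ring_mult G (lin [(s, x)]) (lin [(1, k), (-1, \<phi> k)]) z
        = grp_ring_mult G (lin [(1, k), (-1, \<phi> k)]) (lin [(s, x)]) z"
      using L skew_gN[OF kc, of 1] skew_gS[OF x s] by metis
    then show "s * (ind (x \<otimes> k) z - ind (x \<otimes> \<phi> k) z) = s * (ind (k \<otimes> x) z - ind (\<phi> k \<otimes> x) z)"
      unfolding prod_NS[OF kc xc] prod_SN[OF kc xc] by simp
  qed
  have C: ?C
  proof (intro ballI allI)
    fix x y s t z assume x: "x \<in> SS" and y: "y \<in> SS" and s: "s \<in> (R2::'r set)" and t: "t \<in> (R2::'r set)"
    have xc: "x \<in> carrier G" and yc: "y \<in> carrier G" using x y SS_carrier by auto
    have "grp_ring_mult G (lin [(s, x)]) (lin [(t, y)]) z = grp_ring_mult G (lin [(t, y)]) (lin [(s, x)]) z"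
      using L skew_gS[OF x s] skew_gS[OF y t] by metis
    then show "s * t * ind (x \<otimes> y) z = s * t * ind (y \<otimes> x) z"
      unfolding prod_SS[OF xc yc] prod_SS[OF yc xc] by (simp add: mult.commute)
  qed
  show "?A \<and> ?B \<and> ?C" using A B C by blast
next
  assume ABC: "?A \<and> ?B \<and> ?C"
  then have A: ?A and B: ?B and C: ?C by auto
  have GC: "\<forall>a\<in>(Gens :: ('a \<Rightarrow> 'r) set). \<forall>b\<in>Gens. grp_ring_mult G a b = grp_ring_mult G b a"
  proof (intro ballI)
    fix a b :: "'a \<Rightarrow> 'r" assume a: "a \<in> Gens" and b: "b \<in> Gens"
    show "grp_ring_mult G a b = grp_ring_mult G b a"
    proof (rule ext)
      fix z
      from a show "grp_ring_mult G a b z = grp_ring_mult G b a z"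
        unfolding Gens_def
      proof (elim UnE CollectE exE conjE)
        fix r g assume ar: "a = lin [(r, g), (- r, \<phi> g)]" and g: "g \<in> NN"
        have gc: "g \<in> carrier G" using g NN_carrier by auto
        from b show ?thesis unfolding Gens_def
        proof (elim UnE CollectE exE conjE)
          fix t h assume br: "b = lin [(t, h), (- t, \<phi> h)]" and h: "h \<in> NN"
          have hc: "h \<in> carrier G" using h NN_carrier by auto
          show ?thesis unfolding ar br prod_NN[OF gc hc] prod_NN[OF hc gc]
            using A g h by (metis mult.commute)
        next
          fix s x assume br: "b = lin [(s, x)]" and x: "x \<in> SS" and s: "s \<in> R2"
          have xc: "x \<in> carrier G" using x SS_carrier by auto
          have "s * (ind (x \<otimes> g) z - ind (x \<otimes> \<phi> g) z) = s * (ind (g \<otimes> x) z - ind (\<phi> g \<otimes> x) z)"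
            using B x g s by blast
          then show ?thesis unfolding ar br prod_NS[OF gc xc] prod_SN[OF gc xc]
            by (metis mult.assoc)
        qed
      next
        fix s x assume ar: "a = lin [(s, x)]" and x: "x \<in> SS" and s: "s \<in> R2"
        have xc: "x \<in> carrier G" using x SS_carrier by auto
        from b show ?thesis unfolding Gens_def
        proof (elim UnE CollectE exE conjE)
          fix r g assume br: "b = lin [(r, g), (- r, \<phi> g)]" and g: "g \<in> NN"
          have gc: "g \<in> carrier G" using g NN_carrier by auto
          have "s * (ind (x \<otimes> g) z - ind (x \<otimes> \<phi> g) z) = s * (ind (g \<otimes> x) z - ind (\<phi> g \<otimes> x) z)"
            using B x g s by blast
          then show ?thesis unfolding ar br prod_NS[OF gc xc] prod_SN[OF gc xc]
            by (metis mult.assoc)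
        next
          fix t y assume br: "b = lin [(t, y)]" and y: "y \<in> SS" and t: "t \<in> R2"
          have yc: "y \<in> carrier G" using y SS_carrier by auto
          show ?thesis unfolding ar br prod_SS[OF xc yc] prod_SS[OF yc xc]
            using C x y s t by (metis mult.commute)
        qed
      qed
    qed
  qed
  show ?L
  proof (intro ballI)
    fix \<alpha> \<beta> :: "'a \<Rightarrow> 'r" assume "\<alpha> \<in> skew_elems G \<phi>" "\<beta> \<in> skew_elems G \<phi>"
    then show "grp_ring_mult G \<alpha> \<beta> = grp_ring_mult G \<beta> \<alpha>"
      using span_comm[OF Gens_grp_ring GC] skew_span by blast
  qed
qed

end

context invo
begin

lemma lcan: "x \<in> carrier G \<Longrightarrow> y \<in> carrier G \<Longrightarrow> z \<in> carrier G \<Longrightarrow> (x \<otimes> y = x \<otimes> z) = (y = z)"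
  by simp

lemma inv_assoc1[simp]: "x \<in> carrier G \<Longrightarrow> y \<in> carrier G \<Longrightarrow> x \<otimes> (inv x \<otimes> y) = y"
  by (simp add: m_assoc[symmetric])

lemma inv_assoc2[simp]: "x \<in> carrier G \<Longrightarrow> y \<in> carrier G \<Longrightarrow> inv x \<otimes> (x \<otimes> y) = y"
  by (simp add: m_assoc[symmetric])

definition pairP where
  "pairP g h \<longleftrightarrow> g \<otimes> h = \<phi> g \<otimes> \<phi> h \<and> g \<otimes> h = h \<otimes> \<phi> g \<and> g \<otimes> h = \<phi> h \<otimes> g"

lemma loc:
  assumes g: "g \<in> carrier G" and h: "h \<in> carrier G"
    and e1: "g \<otimes> h = \<phi> g \<otimes> \<phi> h" and e2: "g \<otimes> h = h \<otimes> \<phi> g" and e3: "g \<otimes> h = \<phi> h \<otimes> g"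
    and e5: "h \<otimes> g = g \<otimes> \<phi> h" and e6: "h \<otimes> g = \<phi> g \<otimes> h"
  defines "c \<equiv> \<phi> g \<otimes> inv g"
  shows "c \<in> carrier G" "c \<otimes> c = \<one>" "g \<otimes> h = c \<otimes> (h \<otimes> g)" "\<phi> h = c \<otimes> h" "\<phi> g = c \<otimes> g"
    "c \<otimes> g = g \<otimes> c" "c \<otimes> h = h \<otimes> c"
proof -
  show cc: "c \<in> carrier G" unfolding c_def using g by simp
  show pg: "\<phi> g = c \<otimes> g" unfolding c_def using g by (simp add: m_assoc)
  have ph5: "\<phi> h = inv g \<otimes> (h \<otimes> g)" using inv_solve_left[of "\<phi> h" g "h \<otimes> g"] g h e5 by simp
  show E1: "g \<otimes> h = c \<otimes> (h \<otimes> g)" unfolding e1 pg ph5 using g h cc by (simp add: m_assoc)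
  have "\<one> \<otimes> (h \<otimes> g) = (c \<otimes> c) \<otimes> (h \<otimes> g)"
    using e6 unfolding pg using E1 g h cc by (simp add: m_assoc)
  then show "c \<otimes> c = \<one>" using g h cc by (metis right_cancel m_closed one_closed)
  have "(h \<otimes> c) \<otimes> g = (c \<otimes> h) \<otimes> g"
    using e2 E1 unfolding pg using g h cc by (simp add: m_assoc)
  then show "c \<otimes> h = h \<otimes> c" using g h cc by (metis right_cancel m_closed)
  have "\<phi> h \<otimes> g = (c \<otimes> h) \<otimes> g" using e3 E1 g h cc by (simp add: m_assoc)
  then show "\<phi> h = c \<otimes> h" using g h cc by (metis right_cancel m_closed phi_closed)
  have "(g \<otimes> c) \<otimes> h = (c \<otimes> g) \<otimes> h"
    using e5 e6 unfolding pg \<open>\<phi> h = c \<otimes> h\<close> using g h cc by (simp add: m_assoc)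
  then show "c \<otimes> g = g \<otimes> c" using g h cc by (metis right_cancel m_closed)
qed

lemma comm_mult: "y \<in> carrier G \<Longrightarrow> a \<in> carrier G \<Longrightarrow> b \<in> carrier G \<Longrightarrow> y \<otimes> a = a \<otimes> y \<Longrightarrow> y \<otimes> b = b \<otimes> y
   \<Longrightarrow> y \<otimes> (a \<otimes> b) = (a \<otimes> b) \<otimes> y"
  by (metis m_assoc)

lemma comm_inv: "y \<in> carrier G \<Longrightarrow> a \<in> carrier G \<Longrightarrow> y \<otimes> a = a \<otimes> y \<Longrightarrow> y \<otimes> inv a = inv a \<otimes> y"
  by (metis inv_solve_left inv_solve_right m_assoc m_closed inv_closed)

lemma NN_inv: "k \<in> NN \<Longrightarrow> inv k \<in> NN"
  unfolding NN_def using phi_inv inv_inj by (auto simp: inj_on_def)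

lemma SS_iff: "x \<in> carrier G \<Longrightarrow> x \<in> SS \<longleftrightarrow> x \<notin> NN"
  unfolding NN_def fixed_set_def by auto

end

locale invo_glob = invo +
  assumes HP: "\<And>g h. g \<in> NN \<Longrightarrow> h \<in> NN \<Longrightarrow> g \<otimes> h \<noteq> h \<otimes> g \<Longrightarrow> pairP g h"
    and H2: "\<And>x k. x \<in> SS \<Longrightarrow> k \<in> NN \<Longrightarrow> x \<otimes> k = k \<otimes> x \<or> (x \<otimes> k = \<phi> k \<otimes> x \<and> x \<otimes> \<phi> k = k \<otimes> x)"
  fixes g0 h0
  assumes g0: "g0 \<in> NN" and h0: "h0 \<in> NN" and nc0: "g0 \<otimes> h0 \<noteq> h0 \<otimes> g0"
begin

lemma loc2:
  assumes g: "g \<in> NN" and h: "h \<in> NN" and nc: "g \<otimes> h \<noteq> h \<otimes> g"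
  shows "\<phi> g \<otimes> inv g \<in> carrier G" "(\<phi> g \<otimes> inv g) \<otimes> (\<phi> g \<otimes> inv g) = \<one>"
    "g \<otimes> h = (\<phi> g \<otimes> inv g) \<otimes> (h \<otimes> g)" "\<phi> h = (\<phi> g \<otimes> inv g) \<otimes> h" "\<phi> g = (\<phi> g \<otimes> inv g) \<otimes> g"
    "(\<phi> g \<otimes> inv g) \<otimes> g = g \<otimes> (\<phi> g \<otimes> inv g)" "(\<phi> g \<otimes> inv g) \<otimes> h = h \<otimes> (\<phi> g \<otimes> inv g)"
    "\<phi> h \<otimes> inv h = \<phi> g \<otimes> inv g"
proof -
  have gc: "g \<in> carrier G" and hc: "h \<in> carrier G" using g h NN_carrier by auto
  have p1: "pairP g h" using HP[OF g h nc] .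
  have p2: "pairP h g" using HP[OF h g] nc by metis
  have P: "g \<otimes> h = \<phi> g \<otimes> \<phi> h" "g \<otimes> h = h \<otimes> \<phi> g" "g \<otimes> h = \<phi> h \<otimes> g"
    using p1 unfolding pairP_def by auto
  have Q: "h \<otimes> g = g \<otimes> \<phi> h" "h \<otimes> g = \<phi> g \<otimes> h"
    using p2 unfolding pairP_def by auto
  note L = loc[OF gc hc P(1) P(2) P(3) Q(1) Q(2)]
  show "\<phi> g \<otimes> inv g \<in> carrier G" by (rule L(1))
  show "(\<phi> g \<otimes> inv g) \<otimes> (\<phi> g \<otimes> inv g) = \<one>" by (rule L(2))
  show "g \<otimes> h = (\<phi> g \<otimes> inv g) \<otimes> (h \<otimes> g)" by (rule L(3))
  show "\<phi> h = (\<phi> g \<otimes> inv g) \<otimes> h" by (rule L(4))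
  show "\<phi> g = (\<phi> g \<otimes> inv g) \<otimes> g" by (rule L(5))
  show "(\<phi> g \<otimes> inv g) \<otimes> g = g \<otimes> (\<phi> g \<otimes> inv g)" by (rule L(6))
  show "(\<phi> g \<otimes> inv g) \<otimes> h = h \<otimes> (\<phi> g \<otimes> inv g)" by (rule L(7))
  show "\<phi> h \<otimes> inv h = \<phi> g \<otimes> inv g"
    using L(1,4) hc by (simp add: m_assoc)
qed

definition cz where "cz = \<phi> g0 \<otimes> inv g0"

lemma g0c: "g0 \<in> carrier G" and h0c: "h0 \<in> carrier G" using g0 h0 NN_carrier by auto

lemma cz_carrier[simp]: "cz \<in> carrier G" unfolding cz_def using g0c by simp

lemma cz_facts: "cz \<otimes> cz = \<one>" "g0 \<otimes> h0 = cz \<otimes> (h0 \<otimes> g0)" "\<phi> g0 = cz \<otimes> g0" "\<phi> h0 = cz \<otimes> h0"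
   "cz \<otimes> g0 = g0 \<otimes> cz" "cz \<otimes> h0 = h0 \<otimes> cz" "\<phi> h0 \<otimes> inv h0 = cz"
  using loc2[OF g0 h0 nc0] unfolding cz_def by auto

lemma cz_ne: "cz \<noteq> \<one>"
  using cz_facts(2) nc0 g0c h0c by auto

lemma cz_inv: "inv cz = cz"
  using cz_facts(1) by (intro inv_equality) auto

lemma cz_cancel[simp]: "x \<in> carrier G \<Longrightarrow> cz \<otimes> (cz \<otimes> x) = x"
  using cz_facts(1) by (simp add: m_assoc[symmetric])

lemma G1: assumes y: "y \<in> NN" shows "\<phi> y = cz \<otimes> y" "cz \<otimes> y = y \<otimes> cz"
proof -
  have yc: "y \<in> carrier G" using y NN_carrier by auto
  have "\<phi> y = cz \<otimes> y \<and> cz \<otimes> y = y \<otimes> cz"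
  proof (cases "y \<otimes> g0 = g0 \<otimes> y")
    case False
    note L = loc2[OF y g0 False]
    then show ?thesis unfolding cz_def by metis
  next
    case yg: True
    show ?thesis
    proof (cases "y \<otimes> h0 = h0 \<otimes> y")
      case False
      note L = loc2[OF y h0 False]
      then show ?thesis using cz_facts(7) by metis
    next
      case yh: True
      have cze: "cz = (g0 \<otimes> h0) \<otimes> inv (h0 \<otimes> g0)"
        using cz_facts(2) inv_solve_right[of cz "g0 \<otimes> h0" "h0 \<otimes> g0"] g0c h0c by simp
      have cy: "cz \<otimes> y = y \<otimes> cz"
        unfolding cze using yc g0c h0c yg yh
        by (metis comm_mult comm_inv m_closed inv_closed)
      have "\<phi> y = cz \<otimes> y"
      proof (cases "y \<otimes> g0 \<in> NN")
        case True
        have nc: "(y \<otimes> g0) \<otimes> h0 \<noteq> h0 \<otimes> (y \<otimes> g0)"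
        proof
          assume "(y \<otimes> g0) \<otimes> h0 = h0 \<otimes> (y \<otimes> g0)"
          then have "y \<otimes> (g0 \<otimes> h0) = y \<otimes> (h0 \<otimes> g0)"
            using yh yc g0c h0c by (metis m_assoc)
          then show False using nc0 yc g0c h0c by simp
        qed
        note L = loc2[OF True h0 nc]
        have "\<phi> (y \<otimes> g0) = cz \<otimes> (y \<otimes> g0)"
          using L(8) cz_facts(7) inv_solve_right[of cz "\<phi> (y \<otimes> g0)" "y \<otimes> g0"] yc g0c by simp
        then have "cz \<otimes> (g0 \<otimes> \<phi> y) = cz \<otimes> (g0 \<otimes> y)"
          using phi_mult[OF yc g0c] cz_facts(3) yg yc g0c by (simp add: m_assoc)
        then have "\<phi> y = y" using yc g0c by simp
        then show ?thesis using y NN_phi by auto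
      next
        case False
        then have "\<phi> (y \<otimes> g0) = y \<otimes> g0" using yc g0c unfolding NN_def by auto
        then have "g0 \<otimes> (cz \<otimes> \<phi> y) = g0 \<otimes> y"
          using phi_mult[OF yc g0c] cz_facts(3,5) yg yc g0c by (simp add: m_assoc)
        then have "cz \<otimes> \<phi> y = y" using yc g0c by simp
        then show ?thesis using yc by (metis cz_cancel phi_closed)
      qed
      then show ?thesis using cy by auto
    qed
  qed
  then show "\<phi> y = cz \<otimes> y" "cz \<otimes> y = y \<otimes> cz" by auto
qed

lemma g0h0_NN: "g0 \<otimes> h0 \<in> NN"
proof -
  have "\<phi> (g0 \<otimes> h0) = (cz \<otimes> h0) \<otimes> (cz \<otimes> g0)"
    using phi_mult[OF g0c h0c] cz_facts(3,4) by simp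
  also have "\<dots> = cz \<otimes> ((h0 \<otimes> cz) \<otimes> g0)" using g0c h0c by (simp add: m_assoc)
  also have "\<dots> = cz \<otimes> ((cz \<otimes> h0) \<otimes> g0)" using cz_facts(6) by simp
  also have "\<dots> = h0 \<otimes> g0" using g0c h0c by (simp add: m_assoc)
  finally have "\<phi> (g0 \<otimes> h0) = h0 \<otimes> g0" .
  then show ?thesis unfolding NN_def using nc0 g0c h0c by auto
qed

lemma SS_mult: assumes x: "x \<in> SS" and k: "k \<in> NN" and "x \<otimes> k \<notin> NN"
  shows "x \<otimes> k = cz \<otimes> (k \<otimes> x)"
proof -
  have xc: "x \<in> carrier G" and kc: "k \<in> carrier G" using x k SS_carrier NN_carrier by auto
  have "\<phi> (x \<otimes> k) = x \<otimes> k" using assms(3) xc kc unfolding NN_def by auto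
  then show ?thesis using phi_mult[OF xc kc] G1(1)[OF k] SS_phi[OF x] xc kc by (simp add: m_assoc)
qed

lemma exk: assumes x: "x \<in> SS" shows "\<exists>k\<in>NN. x \<otimes> k \<in> NN"
proof (rule ccontr)
  assume "\<not> ?thesis"
  then have a: "x \<otimes> g0 \<notin> NN" "x \<otimes> h0 \<notin> NN" "x \<otimes> (g0 \<otimes> h0) \<notin> NN" using g0 h0 g0h0_NN by auto
  have xc: "x \<in> carrier G" using x SS_carrier by auto
  have e1: "x \<otimes> g0 = cz \<otimes> (g0 \<otimes> x)" using SS_mult[OF x g0 a(1)] .
  have e2: "x \<otimes> h0 = cz \<otimes> (h0 \<otimes> x)" using SS_mult[OF x h0 a(2)] .
  have e3: "x \<otimes> (g0 \<otimes> h0) = cz \<otimes> ((g0 \<otimes> h0) \<otimes> x)" using SS_mult[OF x g0h0_NN a(3)] .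
  have "x \<otimes> (g0 \<otimes> h0) = (x \<otimes> g0) \<otimes> h0" using xc g0c h0c by (simp add: m_assoc)
  also have "\<dots> = cz \<otimes> (g0 \<otimes> (cz \<otimes> (h0 \<otimes> x)))" unfolding e1 using xc g0c h0c e2 by (simp add: m_assoc)
  also have "\<dots> = (g0 \<otimes> h0) \<otimes> x" using xc g0c h0c cz_facts(5)
    by (metis cz_cancel cz_carrier m_assoc m_closed)
  finally have "cz \<otimes> ((g0 \<otimes> h0) \<otimes> x) = \<one> \<otimes> ((g0 \<otimes> h0) \<otimes> x)" using e3 xc g0c h0c by simp
  then have "cz = \<one>" using xc g0c h0c by (metis right_cancel m_closed one_closed cz_carrier)
  then show False using cz_ne by simp
qed

lemma G2: assumes y: "y \<in> carrier G" shows "cz \<otimes> y = y \<otimes> cz"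
proof (cases "y \<in> NN")
  case True then show ?thesis using G1 by auto
next
  case False
  then have yS: "y \<in> SS" using SS_iff y by auto
  obtain k where k: "k \<in> NN" "y \<otimes> k \<in> NN" using exk[OF yS] by auto
  have kc: "k \<in> carrier G" using k NN_carrier by auto
  have e: "y = (y \<otimes> k) \<otimes> inv k" using y kc by (simp add: m_assoc)
  have "cz \<otimes> ((y \<otimes> k) \<otimes> inv k) = ((y \<otimes> k) \<otimes> inv k) \<otimes> cz"
    by (rule comm_mult[OF cz_carrier _ _ G1(2)[OF k(2)] comm_inv[OF cz_carrier kc G1(2)[OF k(1)]]])
      (use y kc in auto)
  then show ?thesis using e by metis
qed

definition Qc where "Qc a b \<longleftrightarrow> a \<otimes> b = b \<otimes> a \<or> a \<otimes> b = cz \<otimes> (b \<otimes> a)"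

lemma Q_N: assumes a: "a \<in> carrier G" and b: "b \<in> NN" shows "Qc a b"
proof -
  have bc: "b \<in> carrier G" using b NN_carrier by auto
  show ?thesis
  proof (cases "a \<in> NN")
    case True
    show ?thesis
    proof (cases "a \<otimes> b = b \<otimes> a")
      case True then show ?thesis unfolding Qc_def by auto
    next
      case False
      note L = loc2[OF \<open>a \<in> NN\<close> b False]
      have "\<phi> a \<otimes> inv a = cz" using G1(1)[OF \<open>a \<in> NN\<close>] a by (simp add: m_assoc)
      then show ?thesis using L(3) unfolding Qc_def by metis
    qed
  next
    case False
    then have aS: "a \<in> SS" using SS_iff a by auto
    then show ?thesis using H2[OF aS b] G1(1)[OF b] a bc unfolding Qc_def by (auto simp: m_assoc)
  qed
qed

lemma Q_mult: assumes a: "a \<in> carrier G" "u \<in> carrier G" "v \<in> carrier G" and "Qc a u" "Qc a v"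
  shows "Qc a (u \<otimes> v)"
proof -
  have cu: "cz \<otimes> u = u \<otimes> cz" using G2 a by auto
  have ca: "cz \<otimes> a = a \<otimes> cz" using G2 a by auto
  from assms(4,5) show ?thesis unfolding Qc_def
  proof (elim disjE)
    assume 1: "a \<otimes> u = u \<otimes> a" "a \<otimes> v = v \<otimes> a"
    have "a \<otimes> (u \<otimes> v) = u \<otimes> (a \<otimes> v)" using a by (simp add: m_assoc[symmetric] 1(1))
    also have "\<dots> = u \<otimes> v \<otimes> a" using a by (simp add: 1(2) m_assoc)
    finally show "a \<otimes> (u \<otimes> v) = u \<otimes> v \<otimes> a \<or> a \<otimes> (u \<otimes> v) = cz \<otimes> (u \<otimes> v \<otimes> a)" by auto
  next
    assume 1: "a \<otimes> u = u \<otimes> a" "a \<otimes> v = cz \<otimes> (v \<otimes> a)"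
    have "a \<otimes> (u \<otimes> v) = u \<otimes> (a \<otimes> v)" using a by (simp add: m_assoc[symmetric] 1(1))
    also have "\<dots> = u \<otimes> (cz \<otimes> (v \<otimes> a))" using a by (simp add: 1(2))
    also have "\<dots> = (u \<otimes> cz) \<otimes> (v \<otimes> a)" using a by (simp add: m_assoc)
    also have "\<dots> = (cz \<otimes> u) \<otimes> (v \<otimes> a)" using cu by simp
    also have "\<dots> = cz \<otimes> (u \<otimes> v \<otimes> a)" using a by (simp add: m_assoc)
    finally have "a \<otimes> (u \<otimes> v) = cz \<otimes> (u \<otimes> v \<otimes> a)" .
    then show "a \<otimes> (u \<otimes> v) = u \<otimes> v \<otimes> a \<or> a \<otimes> (u \<otimes> v) = cz \<otimes> (u \<otimes> v \<otimes> a)" by auto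
  next
    assume 1: "a \<otimes> u = cz \<otimes> (u \<otimes> a)" "a \<otimes> v = v \<otimes> a"
    have "a \<otimes> (u \<otimes> v) = (a \<otimes> u) \<otimes> v" using a by (simp add: m_assoc)
    also have "\<dots> = cz \<otimes> (u \<otimes> (a \<otimes> v))" using a by (simp add: 1(1) m_assoc)
    also have "\<dots> = cz \<otimes> (u \<otimes> v \<otimes> a)" using a by (simp add: 1(2) m_assoc)
    finally have "a \<otimes> (u \<otimes> v) = cz \<otimes> (u \<otimes> v \<otimes> a)" .
    then show "a \<otimes> (u \<otimes> v) = u \<otimes> v \<otimes> a \<or> a \<otimes> (u \<otimes> v) = cz \<otimes> (u \<otimes> v \<otimes> a)" by auto
  next
    assume 1: "a \<otimes> u = cz \<otimes> (u \<otimes> a)" "a \<otimes> v = cz \<otimes> (v \<otimes> a)"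
    have "a \<otimes> (u \<otimes> v) = (a \<otimes> u) \<otimes> v" using a by (simp add: m_assoc)
    also have "\<dots> = cz \<otimes> (u \<otimes> (a \<otimes> v))" using a by (simp add: 1(1) m_assoc)
    also have "\<dots> = cz \<otimes> (u \<otimes> (cz \<otimes> (v \<otimes> a)))" using a by (simp add: 1(2))
    also have "\<dots> = cz \<otimes> (cz \<otimes> (u \<otimes> (v \<otimes> a)))" using a cu by (simp add: m_assoc[symmetric])
    also have "\<dots> = u \<otimes> v \<otimes> a" using a by (simp add: m_assoc)
    finally show "a \<otimes> (u \<otimes> v) = u \<otimes> v \<otimes> a \<or> a \<otimes> (u \<otimes> v) = cz \<otimes> (u \<otimes> v \<otimes> a)" by auto
  qed
qed

lemma G3: assumes a: "a \<in> carrier G" and b: "b \<in> carrier G" shows "Qc a b"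
proof (cases "b \<in> NN")
  case True then show ?thesis using Q_N a by auto
next
  case False
  then have bS: "b \<in> SS" using SS_iff b by auto
  obtain k where k: "k \<in> NN" "b \<otimes> k \<in> NN" using exk[OF bS] by auto
  have kc: "k \<in> carrier G" using k NN_carrier by auto
  have e: "b = (b \<otimes> k) \<otimes> inv k" using b kc by (simp add: m_assoc)
  have "Qc a ((b \<otimes> k) \<otimes> inv k)"
    using Q_mult[OF a _ _ Q_N[OF a k(2)] Q_N[OF a NN_inv[OF k(1)]]] b kc by auto
  then show ?thesis using e by metis
qed

end

context invo begin
end

context invo_glob
begin

lemma sub_cz: "subgroup {\<one>, cz} G"
proof (rule subgroupI)
  show "{\<one>, cz} \<subseteq> carrier G" by auto
  show "{\<one>, cz} \<noteq> {}" by auto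
  fix a assume "a \<in> {\<one>, cz}" then show "inv a \<in> {\<one>, cz}" using cz_inv by auto
next
  fix a b assume "a \<in> {\<one>, cz}" "b \<in> {\<one>, cz}" then show "a \<otimes> b \<in> {\<one>, cz}"
    using cz_facts(1) by auto
qed

lemma derived_eq: "derived G (carrier G) = {\<one>, cz}"
proof
  show "derived G (carrier G) \<subseteq> {\<one>, cz}"
    unfolding derived_def
  proof (rule generate_subgroup_incl[OF _ sub_cz])
    show "derived_set G (carrier G) \<subseteq> {\<one>, cz}"
    proof
      fix w assume "w \<in> derived_set G (carrier G)"
      then obtain a b where ab: "a \<in> carrier G" "b \<in> carrier G" "w = a \<otimes> b \<otimes> inv a \<otimes> inv b" by auto
      have "Qc a b" using G3 ab by auto
      then show "w \<in> {\<one>, cz}" unfolding Qc_def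
      proof
        assume "a \<otimes> b = b \<otimes> a"
        then have "w = b \<otimes> a \<otimes> inv a \<otimes> inv b" using ab by simp
        then show ?thesis using ab by (simp add: m_assoc)
      next
        assume "a \<otimes> b = cz \<otimes> (b \<otimes> a)"
        then have "w = cz \<otimes> (b \<otimes> a) \<otimes> inv a \<otimes> inv b" using ab by simp
        then show ?thesis using ab by (simp add: m_assoc)
      qed
    qed
  qed
next
  have s: "subgroup (derived G (carrier G)) G" by (rule derived_is_subgroup) auto
  have "cz = g0 \<otimes> h0 \<otimes> inv g0 \<otimes> inv h0"
    using cz_facts(2) g0c h0c by (simp add: m_assoc)
  then have "cz \<in> derived_set G (carrier G)" using g0c h0c by blast
  then have "cz \<in> derived G (carrier G)" unfolding derived_def by (rule generate.incl)
  then show "{\<one>, cz} \<subseteq> derived G (carrier G)" using subgroup.one_closed[OF s] by auto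
qed

lemma derived_card: "card (derived G (carrier G)) = 2"
  unfolding derived_eq using cz_ne by auto

lemma cosets: "g \<in> carrier G \<Longrightarrow> derived G (carrier G) #> \<phi> g = derived G (carrier G) #> g"
proof -
  assume g: "g \<in> carrier G"
  show ?thesis
  proof (cases "g \<in> NN")
    case True
    then have "\<phi> g = cz \<otimes> g" using G1 by auto
    then show ?thesis unfolding derived_eq r_coset_def using g by auto
  next
    case False
    then have "\<phi> g = g" using g unfolding NN_def by auto
    then show ?thesis by simp
  qed
qed

lemma squares: "g \<in> carrier G \<Longrightarrow> g \<otimes> g \<in> SS"
proof -
  assume g: "g \<in> carrier G"
  have "\<phi> (g \<otimes> g) = g \<otimes> g"
  proof (cases "g \<in> NN")
    case True
    then have p: "\<phi> g = cz \<otimes> g" using G1 by auto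
    have "\<phi> (g \<otimes> g) = (cz \<otimes> g) \<otimes> (cz \<otimes> g)" using phi_mult[OF g g] p by simp
    also have "\<dots> = cz \<otimes> ((g \<otimes> cz) \<otimes> g)" using g by (simp add: m_assoc)
    also have "\<dots> = cz \<otimes> ((cz \<otimes> g) \<otimes> g)" using G2[OF g] by simp
    also have "\<dots> = g \<otimes> g" using g by (simp add: m_assoc)
    finally show ?thesis .
  next
    case False
    then have "\<phi> g = g" using g unfolding NN_def by auto
    then show ?thesis using phi_mult[OF g g] by simp
  qed
  then show ?thesis using g unfolding fixed_set_def by auto
qed

end

lemma two_ne:
  assumes "CHAR('r::comm_ring_1) \<noteq> 2" shows "(2::'r) \<noteq> 0"
proof
  assume h: "(2::'r) = 0"
  have "CHAR('r) = 2"
  proof (rule CHAR_eq_posI)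
    show "of_nat 2 = (0::'r)" using h by simp
    fix x :: nat assume "0 < x" "x < 2" then have "x = 1" by auto
    then show "of_nat x \<noteq> (0::'r)" by simp
  qed auto
  then show False using assms by simp
qed

lemma three_ne:
  assumes "(R2::'r::comm_ring_1 set) \<noteq> {0}" shows "(3::'r) \<noteq> 0"
proof
  assume h: "(3::'r) = 0"
  have "0 \<in> (R2::'r set)" unfolding R2_def by simp
  then obtain s :: 'r where s: "s \<in> R2" "s \<noteq> 0" using assms by blast
  have "s = 3 * s - 2 * s" by (simp add: algebra_simps)
  also have "\<dots> = 0" using h s(1) unfolding R2_def by simp
  finally show False using s by simp
qed

lemma char4:
  assumes "(2::'r::comm_ring_1) \<noteq> 0" "(3::'r) \<noteq> 0" "(4::'r) = 0" shows "CHAR('r) = 4"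
proof (rule CHAR_eq_posI)
  show "of_nat 4 = (0::'r)" using assms by simp
  fix x :: nat assume "0 < x" "x < 4" then have "x = 1 \<or> x = 2 \<or> x = 3" by auto
  then show "of_nat x \<noteq> (0::'r)" using assms by auto
qed auto

lemma four_zero: "CHAR('r::comm_ring_1) = 4 \<Longrightarrow> (4::'r) = 0"
  using of_nat_CHAR[where 'a='r] by simp

lemma bool_count:
  assumes "(1::'r::comm_ring_1) + of_bool b1 + of_bool b2 + of_bool b3 - of_bool b4 = 0"
    "(2::'r) \<noteq> 0" "(3::'r) \<noteq> 0"
  shows "(b1 \<and> b2 \<and> b3 \<and> \<not> b4 \<and> (4::'r) = 0) \<or> (\<not> b1 \<and> \<not> b2 \<and> \<not> b3 \<and> b4)"
  using assms by (cases b1; cases b2; cases b3; cases b4) (simp_all add: algebra_simps)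

lemma ind_of_bool: "ind a z = (of_bool (a = z) :: 'r::comm_ring_1)"
  unfolding ind_def by simp

context invo
begin

lemma H2_from_K2:
  assumes s: "(s::'r::comm_ring_1) \<in> R2" "s \<noteq> 0" and x: "x \<in> SS" and k: "k \<in> NN"
    and K2: "\<And>z. s * (ind (x \<otimes> k) z - ind (x \<otimes> \<phi> k) z) = s * (ind (k \<otimes> x) z - ind (\<phi> k \<otimes> x) z)"
  shows "x \<otimes> k = k \<otimes> x \<or> (x \<otimes> k = \<phi> k \<otimes> x \<and> x \<otimes> \<phi> k = k \<otimes> x)"
proof (cases "x \<otimes> k = k \<otimes> x")
  case True then show ?thesis by auto
next
  case nc: False
  have xc: "x \<in> carrier G" and kc: "k \<in> carrier G" and pk: "\<phi> k \<noteq> k"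
    using x k SS_carrier NN_carrier NN_phi by auto
  have d1: "x \<otimes> \<phi> k \<noteq> x \<otimes> k" using xc kc pk by simp
  have sn: "s = - s" using R2_neg_self[OF s(1)] .
  have e1: "s = s * (0 - ind (\<phi> k \<otimes> x) (x \<otimes> k))"
    using K2[of "x \<otimes> k"] nc d1 unfolding ind_def by (auto split: if_splits)
  have a1: "\<phi> k \<otimes> x = x \<otimes> k"
  proof (rule ccontr)
    assume "\<phi> k \<otimes> x \<noteq> x \<otimes> k" then have "s = 0" using e1 unfolding ind_def by simp
    then show False using s by simp
  qed
  have d2: "\<phi> k \<otimes> x \<noteq> x \<otimes> \<phi> k" using a1 d1 by simp
  have e2: "- s = s * ind (k \<otimes> x) (x \<otimes> \<phi> k)"
    using K2[of "x \<otimes> \<phi> k"] d1 d2 unfolding ind_def by (auto split: if_splits)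
  have a2: "k \<otimes> x = x \<otimes> \<phi> k"
  proof (rule ccontr)
    assume "k \<otimes> x \<noteq> x \<otimes> \<phi> k" then have "s = 0" using e2 unfolding ind_def by simp
    then show False using s by simp
  qed
  show ?thesis using a1 a2 by auto
qed

lemma pair_from_K1:
  assumes two: "(2::'r::comm_ring_1) \<noteq> 0" and three: "(3::'r) \<noteq> 0"
    and H2: "\<And>x k. x \<in> SS \<Longrightarrow> k \<in> NN \<Longrightarrow> x \<otimes> k = k \<otimes> x \<or> (x \<otimes> k = \<phi> k \<otimes> x \<and> x \<otimes> \<phi> k = k \<otimes> x)"
    and g: "g \<in> NN" and h: "h \<in> NN" and nc: "g \<otimes> h \<noteq> h \<otimes> g"
    and K1: "\<And>z. ind (g \<otimes> h) z - ind (g \<otimes> \<phi> h) z - ind (\<phi> g \<otimes> h) z + ind (\<phi> g \<otimes> \<phi> h) z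
        = (ind (h \<otimes> g) z - ind (h \<otimes> \<phi> g) z - ind (\<phi> h \<otimes> g) z + ind (\<phi> h \<otimes> \<phi> g) z :: 'r)"
  shows "pairP g h \<and> (4::'r) = 0"
proof -
  have gc: "g \<in> carrier G" and hc: "h \<in> carrier G" and pg: "\<phi> g \<noteq> g" and ph: "\<phi> h \<noteq> h"
    using g h NN_carrier NN_phi by auto
  have d1: "g \<otimes> \<phi> h \<noteq> g \<otimes> h" using gc hc ph by simp
  have d2: "\<phi> g \<otimes> h \<noteq> g \<otimes> h" using gc hc pg by simp
  have E: "(1::'r) + of_bool (\<phi> g \<otimes> \<phi> h = g \<otimes> h) + of_bool (h \<otimes> \<phi> g = g \<otimes> h)
      + of_bool (\<phi> h \<otimes> g = g \<otimes> h) - of_bool (\<phi> h \<otimes> \<phi> g = g \<otimes> h) = 0"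
    using K1[of "g \<otimes> h"] d1 d2 nc unfolding ind_of_bool by (simp add: algebra_simps)
  note B = bool_count[OF E two three]
  show ?thesis
  proof (cases "\<phi> h \<otimes> \<phi> g = g \<otimes> h")
    case False
    have "\<phi> g \<otimes> \<phi> h = g \<otimes> h" "h \<otimes> \<phi> g = g \<otimes> h" "\<phi> h \<otimes> g = g \<otimes> h" "(4::'r) = 0"
      using B False by auto
    then show ?thesis unfolding pairP_def by auto
  next
    case True
    then have S: "g \<otimes> h \<in> SS" using phi_mult[OF gc hc] gc hc unfolding fixed_set_def by auto
    have "h \<otimes> \<phi> g = g \<otimes> h"
    proof -
      from H2[OF S g] show ?thesis
      proof
        assume "g \<otimes> h \<otimes> g = g \<otimes> (g \<otimes> h)"
        then have "g \<otimes> (h \<otimes> g) = g \<otimes> (g \<otimes> h)" using gc hc by (simp add: m_assoc)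
        then show ?thesis using nc gc hc by simp
      next
        assume "g \<otimes> h \<otimes> g = \<phi> g \<otimes> (g \<otimes> h) \<and> g \<otimes> h \<otimes> \<phi> g = g \<otimes> (g \<otimes> h)"
        then have "g \<otimes> (h \<otimes> \<phi> g) = g \<otimes> (g \<otimes> h)" using gc hc by (simp add: m_assoc)
        then show ?thesis using gc hc by simp
      qed
    qed
    then show ?thesis using B True by auto
  qed
qed

lemma gen_comm:
  assumes A: "A \<subseteq> carrier G" and C: "\<forall>a\<in>A. \<forall>b\<in>A. a \<otimes> b = b \<otimes> a"
    and a: "a \<in> generate G A" and b: "b \<in> generate G A"
  shows "a \<otimes> b = b \<otimes> a"
proof -
  have gc: "generate G A \<subseteq> carrier G" using generate_incl[OF A] .
  have 1: "\<forall>a\<in>A. a \<otimes> b = b \<otimes> a" if "b \<in> generate G A" for b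
    using that
  proof (induction rule: generate.induct)
    case one then show ?case using A by auto
  next
    case (incl h) then show ?case using C by auto
  next
    case (inv h) then show ?case using A C comm_inv by (metis subsetD)
  next
    case (eng h1 h2) then show ?case using A gc comm_mult by (metis subsetD)
  qed
  show ?thesis using a
  proof (induction rule: generate.induct)
    case one then show ?case using b gc by auto
  next
    case (incl h) then show ?case using 1[OF b] by auto
  next
    case (inv h) then show ?case using 1[OF b] A b gc comm_inv by (metis subsetD)
  next
    case (eng h1 h2) then show ?case using b gc comm_mult by (metis subsetD)
  qed
qed

end

lemma four_swap: "(4::'r::comm_ring_1) = 0 \<Longrightarrow> a - b - b + a = (b - a - a + b :: 'r)"
proof -
  assume h: "(4::'r) = 0"
  have "(a - b - b + a) - (b - a - a + b) = 4 * (a - b)" by (simp add: algebra_simps)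
  then show ?thesis using h by simp
qed

lemma neg_swap: "(s::'r::comm_ring_1) = - s \<Longrightarrow> s * (a - b) = s * (b - a)"
proof -
  assume h: "s = - s"
  have "s * (b - a) = (- s) * (a - b)" by (simp add: algebra_simps)
  then show ?thesis using h by simp
qed

context invo
begin

lemma NN_eq: "{g \<in> carrier G. g \<notin> fixed_set G \<phi>} = NN"
  unfolding NN_def fixed_set_def by auto

lemma NN_phi_mem: "g \<in> NN \<Longrightarrow> \<phi> g \<in> NN"
  unfolding NN_def by auto

lemma dirA:
  assumes Kab: "\<forall>a\<in>generate G NN. \<forall>b\<in>generate G NN. a \<otimes> b = b \<otimes> a"
    and R0: "\<forall>r1\<in>(R2::'r::comm_ring_1 set). \<forall>r2\<in>R2. r1 * r2 = 0"
  shows "(\<forall>g\<in>NN. \<forall>h\<in>NN. \<forall>z. ind (g \<otimes> h) z - ind (g \<otimes> \<phi> h) z - ind (\<phi> g \<otimes> h) z + ind (\<phi> g \<otimes> \<phi> h) z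
        = (ind (h \<otimes> g) z - ind (h \<otimes> \<phi> g) z - ind (\<phi> h \<otimes> g) z + ind (\<phi> h \<otimes> \<phi> g) z :: 'r))
   \<and> (\<forall>x\<in>SS. \<forall>k\<in>NN. \<forall>s\<in>(R2::'r set). \<forall>z. s * (ind (x \<otimes> k) z - ind (x \<otimes> \<phi> k) z)
        = s * (ind (k \<otimes> x) z - ind (\<phi> k \<otimes> x) z))
   \<and> (\<forall>x\<in>SS. \<forall>y\<in>SS. \<forall>s\<in>(R2::'r set). \<forall>t\<in>R2. \<forall>z. s * t * ind (x \<otimes> y) z = s * t * ind (y \<otimes> x) z)"
proof (intro conjI ballI allI)
  have NK: "NN \<subseteq> generate G NN" by (rule subsetI) (rule generate.incl)
  have NC: "NN \<subseteq> carrier G" unfolding NN_def by auto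
  have sK: "subgroup (generate G NN) G" using generate_is_subgroup[OF NC] .
  fix g h z assume g: "g \<in> NN" and h: "h \<in> NN"
  have m: "g \<in> generate G NN" "h \<in> generate G NN" "\<phi> g \<in> generate G NN" "\<phi> h \<in> generate G NN"
    using g h NN_phi_mem NK by auto
  have "h \<otimes> g = g \<otimes> h" "h \<otimes> \<phi> g = \<phi> g \<otimes> h" "\<phi> h \<otimes> g = g \<otimes> \<phi> h" "\<phi> h \<otimes> \<phi> g = \<phi> g \<otimes> \<phi> h"
    using Kab m by auto
  then show "ind (g \<otimes> h) z - ind (g \<otimes> \<phi> h) z - ind (\<phi> g \<otimes> h) z + ind (\<phi> g \<otimes> \<phi> h) z
        = (ind (h \<otimes> g) z - ind (h \<otimes> \<phi> g) z - ind (\<phi> h \<otimes> g) z + ind (\<phi> h \<otimes> \<phi> g) z :: 'r)"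
    by (simp add: algebra_simps)
next
  have NK: "NN \<subseteq> generate G NN" by (rule subsetI) (rule generate.incl)
  have NC: "NN \<subseteq> carrier G" unfolding NN_def by auto
  have sK: "subgroup (generate G NN) G" using generate_is_subgroup[OF NC] .
  fix x k s z assume x: "x \<in> SS" and k: "k \<in> NN" and s: "s \<in> (R2::'r set)"
  have xc: "x \<in> carrier G" and kc: "k \<in> carrier G" using x k SS_carrier NN_carrier by auto
  show "s * (ind (x \<otimes> k) z - ind (x \<otimes> \<phi> k) z) = s * (ind (k \<otimes> x) z - ind (\<phi> k \<otimes> x) z)"
  proof (cases "x \<in> generate G NN")
    case True
    have "k \<otimes> x = x \<otimes> k" "\<phi> k \<otimes> x = x \<otimes> \<phi> k" using Kab True NK k NN_phi_mem by auto
    then show ?thesis by simp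
  next
    case False
    have notK: "x \<otimes> y \<notin> generate G NN" if y: "y \<in> NN" for y
    proof
      assume a: "x \<otimes> y \<in> generate G NN"
      have yc: "y \<in> carrier G" using y NN_carrier by auto
      have "(x \<otimes> y) \<otimes> inv y \<in> generate G NN"
        using subgroup.m_closed[OF sK a subgroup.m_inv_closed[OF sK]] y NK by auto
      then show False using False xc yc by (simp add: m_assoc)
    qed
    have "x \<otimes> k \<in> SS" "x \<otimes> \<phi> k \<in> SS"
      using notK[OF k] notK[OF NN_phi_mem[OF k]] NK xc kc SS_iff by auto
    then have e: "\<phi> k \<otimes> x = x \<otimes> k" "k \<otimes> x = x \<otimes> \<phi> k"
      using phi_mult xc kc SS_phi[OF x] unfolding fixed_set_def by auto
    show ?thesis unfolding e using neg_swap[OF R2_neg_self[OF s]] by simp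
  qed
next
  fix x y s t z assume "s \<in> (R2::'r set)" "t \<in> (R2::'r set)"
  then show "s * t * ind (x \<otimes> y) z = s * t * ind (y \<otimes> x) z" using R0 by simp
qed

lemma dirB:
  assumes C4: "CHAR('r::comm_ring_1) = 4" and card: "card (derived G (carrier G)) = 2"
    and cos: "\<forall>g\<in>carrier G. derived G (carrier G) #> \<phi> g = derived G (carrier G) #> g"
    and Sc: "(\<exists>r1\<in>(R2::'r set). \<exists>r2\<in>R2. r1 * r2 \<noteq> 0) \<longrightarrow> (\<forall>a\<in>SS. \<forall>b\<in>SS. a \<otimes> b = b \<otimes> a)"
  shows "(\<forall>g\<in>NN. \<forall>h\<in>NN. \<forall>z. ind (g \<otimes> h) z - ind (g \<otimes> \<phi> h) z - ind (\<phi> g \<otimes> h) z + ind (\<phi> g \<otimes> \<phi> h) z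
        = (ind (h \<otimes> g) z - ind (h \<otimes> \<phi> g) z - ind (\<phi> h \<otimes> g) z + ind (\<phi> h \<otimes> \<phi> g) z :: 'r))
   \<and> (\<forall>x\<in>SS. \<forall>k\<in>NN. \<forall>s\<in>(R2::'r set). \<forall>z. s * (ind (x \<otimes> k) z - ind (x \<otimes> \<phi> k) z)
        = s * (ind (k \<otimes> x) z - ind (\<phi> k \<otimes> x) z))
   \<and> (\<forall>x\<in>SS. \<forall>y\<in>SS. \<forall>s\<in>(R2::'r set). \<forall>t\<in>R2. \<forall>z. s * t * ind (x \<otimes> y) z = s * t * ind (y \<otimes> x) z)"
proof -
  let ?D = "derived G (carrier G)"
  have sD: "subgroup ?D G" by (rule derived_is_subgroup) auto
  have oneD: "\<one> \<in> ?D" using subgroup.one_closed[OF sD] .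
  obtain c where D: "?D = {\<one>, c}" and c1: "c \<noteq> \<one>"
  proof -
    obtain x y where xy: "?D = {x, y}" "x \<noteq> y" using card card_2_iff by metis
    show ?thesis
    proof (cases "x = \<one>")
      case True then show ?thesis using that xy by auto
    next
      case False then have "y = \<one>" using oneD xy by auto
      then show ?thesis using that xy by auto
    qed
  qed
  have cc: "c \<in> carrier G" using D subgroup.subset[OF sD] by auto
  have "inv c \<in> ?D" using subgroup.m_inv_closed[OF sD] D by auto
  moreover have "inv c \<noteq> \<one>" using c1 cc by (metis inv_inv one_closed inv_one)
  ultimately have ic: "inv c = c" using D by auto
  have c2: "c \<otimes> c = \<one>" using ic cc by (metis r_inv)
  have Q: "a \<otimes> b = b \<otimes> a \<or> a \<otimes> b = c \<otimes> (b \<otimes> a)" if ab: "a \<in> carrier G" "b \<in> carrier G" for a b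
  proof -
    have "a \<otimes> b \<otimes> inv a \<otimes> inv b \<in> derived_set G (carrier G)" using ab by blast
    then have "a \<otimes> b \<otimes> inv a \<otimes> inv b \<in> ?D" unfolding derived_def by (rule generate.incl)
    moreover have "a \<otimes> b \<otimes> inv a \<otimes> inv b = (a \<otimes> b) \<otimes> inv (b \<otimes> a)"
      using ab by (simp add: m_assoc inv_mult_group)
    ultimately have "(a \<otimes> b) \<otimes> inv (b \<otimes> a) = \<one> \<or> (a \<otimes> b) \<otimes> inv (b \<otimes> a) = c" using D by auto
    then show ?thesis
    proof
      assume "(a \<otimes> b) \<otimes> inv (b \<otimes> a) = \<one>"
      then have "a \<otimes> b = \<one> \<otimes> (b \<otimes> a)" using inv_solve_right'[of \<one> "a \<otimes> b" "b \<otimes> a"] ab by simp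
      then show ?thesis using ab by simp
    next
      assume "(a \<otimes> b) \<otimes> inv (b \<otimes> a) = c"
      then have "a \<otimes> b = c \<otimes> (b \<otimes> a)" using inv_solve_right'[of c "a \<otimes> b" "b \<otimes> a"] ab cc by simp
      then show ?thesis by simp
    qed
  qed
  have cent: "a \<otimes> c = c \<otimes> a" if a: "a \<in> carrier G" for a
  proof -
    from Q[OF a cc] show ?thesis
    proof
      assume "a \<otimes> c = c \<otimes> (c \<otimes> a)"
      then have "a \<otimes> c = a \<otimes> \<one>" using a cc c2 by (simp add: m_assoc[symmetric])
      then have "c = \<one>" using a cc by simp
      then show ?thesis using c1 by simp
    qed
  qed
  have cancel: "c \<otimes> (c \<otimes> x) = x" if "x \<in> carrier G" for x
    using that cc c2 by (simp add: m_assoc[symmetric])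
  have phiN: "\<phi> g = c \<otimes> g" if g: "g \<in> NN" for g
  proof -
    have gc: "g \<in> carrier G" using g NN_carrier by auto
    have "\<phi> g \<in> ?D #> \<phi> g" using oneD gc unfolding r_coset_def by force
    then have "\<phi> g \<in> ?D #> g" using cos gc by auto
    then have "\<phi> g = g \<or> \<phi> g = c \<otimes> g" unfolding D r_coset_def using gc by auto
    then show ?thesis using g NN_phi by auto
  qed
  have K1: "\<forall>g\<in>NN. \<forall>h\<in>NN. \<forall>z. ind (g \<otimes> h) z - ind (g \<otimes> \<phi> h) z - ind (\<phi> g \<otimes> h) z + ind (\<phi> g \<otimes> \<phi> h) z
        = (ind (h \<otimes> g) z - ind (h \<otimes> \<phi> g) z - ind (\<phi> h \<otimes> g) z + ind (\<phi> h \<otimes> \<phi> g) z :: 'r)"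
  proof (intro ballI allI)
    fix g h z assume g: "g \<in> NN" and h: "h \<in> NN"
    have gc: "g \<in> carrier G" and hc: "h \<in> carrier G" using g h NN_carrier by auto
    have r: "\<And>u v. u \<in> carrier G \<Longrightarrow> v \<in> carrier G \<Longrightarrow> u \<otimes> (c \<otimes> v) = c \<otimes> (u \<otimes> v)"
      using cent cc by (metis m_assoc)
    have r2: "\<And>u v. u \<in> carrier G \<Longrightarrow> v \<in> carrier G \<Longrightarrow> (c \<otimes> u) \<otimes> (c \<otimes> v) = u \<otimes> v"
    proof -
      fix u v assume u: "u \<in> carrier G" and v: "v \<in> carrier G"
      have "(c \<otimes> u) \<otimes> (c \<otimes> v) = c \<otimes> (u \<otimes> (c \<otimes> v))" using u v cc by (simp add: m_assoc)
      also have "\<dots> = c \<otimes> (c \<otimes> (u \<otimes> v))" using r[OF u v] by simp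
      also have "\<dots> = u \<otimes> v" using cancel u v by simp
      finally show "(c \<otimes> u) \<otimes> (c \<otimes> v) = u \<otimes> v" .
    qed
    have r3: "\<And>u v. u \<in> carrier G \<Longrightarrow> v \<in> carrier G \<Longrightarrow> (c \<otimes> u) \<otimes> v = c \<otimes> (u \<otimes> v)"
      using cc by (simp add: m_assoc)
    have E: "ind (g \<otimes> h) z - ind (g \<otimes> \<phi> h) z - ind (\<phi> g \<otimes> h) z + ind (\<phi> g \<otimes> \<phi> h) z
       = (ind (g \<otimes> h) z - ind (c \<otimes> (g \<otimes> h)) z - ind (c \<otimes> (g \<otimes> h)) z + ind (g \<otimes> h) z :: 'r)"
      "ind (h \<otimes> g) z - ind (h \<otimes> \<phi> g) z - ind (\<phi> h \<otimes> g) z + ind (\<phi> h \<otimes> \<phi> g) z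
       = (ind (h \<otimes> g) z - ind (c \<otimes> (h \<otimes> g)) z - ind (c \<otimes> (h \<otimes> g)) z + ind (h \<otimes> g) z :: 'r)"
      unfolding phiN[OF g] phiN[OF h] using gc hc r r2 r3 by auto
    show "ind (g \<otimes> h) z - ind (g \<otimes> \<phi> h) z - ind (\<phi> g \<otimes> h) z + ind (\<phi> g \<otimes> \<phi> h) z
        = (ind (h \<otimes> g) z - ind (h \<otimes> \<phi> g) z - ind (\<phi> h \<otimes> g) z + ind (\<phi> h \<otimes> \<phi> g) z :: 'r)"
      unfolding E
    proof (cases "g \<otimes> h = h \<otimes> g")
      case True then show "ind (g \<otimes> h) z - ind (c \<otimes> (g \<otimes> h)) z - ind (c \<otimes> (g \<otimes> h)) z + ind (g \<otimes> h) z
       = (ind (h \<otimes> g) z - ind (c \<otimes> (h \<otimes> g)) z - ind (c \<otimes> (h \<otimes> g)) z + ind (h \<otimes> g) z :: 'r)" by simp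
    next
      case False
      then have e1: "g \<otimes> h = c \<otimes> (h \<otimes> g)" using Q gc hc by auto
      then have e2: "c \<otimes> (g \<otimes> h) = h \<otimes> g" using cancel gc hc by simp
      show "ind (g \<otimes> h) z - ind (c \<otimes> (g \<otimes> h)) z - ind (c \<otimes> (g \<otimes> h)) z + ind (g \<otimes> h) z
       = (ind (h \<otimes> g) z - ind (c \<otimes> (h \<otimes> g)) z - ind (c \<otimes> (h \<otimes> g)) z + ind (h \<otimes> g) z :: 'r)"
        unfolding e2 e1[symmetric] by (rule four_swap[OF four_zero[OF C4]])
    qed
  qed
  have K2: "\<forall>x\<in>SS. \<forall>k\<in>NN. \<forall>s\<in>(R2::'r set). \<forall>z. s * (ind (x \<otimes> k) z - ind (x \<otimes> \<phi> k) z)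
        = s * (ind (k \<otimes> x) z - ind (\<phi> k \<otimes> x) z)"
  proof (intro ballI allI)
    fix x k s z assume x: "x \<in> SS" and k: "k \<in> NN" and s: "s \<in> (R2::'r set)"
    have xc: "x \<in> carrier G" and kc: "k \<in> carrier G" using x k SS_carrier NN_carrier by auto
    have r: "x \<otimes> (c \<otimes> k) = c \<otimes> (x \<otimes> k)" using cent xc kc cc by (metis m_assoc)
    have r3: "(c \<otimes> k) \<otimes> x = c \<otimes> (k \<otimes> x)" using xc kc cc by (simp add: m_assoc)
    show "s * (ind (x \<otimes> k) z - ind (x \<otimes> \<phi> k) z) = s * (ind (k \<otimes> x) z - ind (\<phi> k \<otimes> x) z)"
      unfolding phiN[OF k] r r3
    proof (cases "x \<otimes> k = k \<otimes> x")
      case True then show "s * (ind (x \<otimes> k) z - ind (c \<otimes> (x \<otimes> k)) z) = s * (ind (k \<otimes> x) z - ind (c \<otimes> (k \<otimes> x)) z)"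
        by simp
    next
      case False
      then have e1: "x \<otimes> k = c \<otimes> (k \<otimes> x)" using Q xc kc by auto
      then have e2: "c \<otimes> (x \<otimes> k) = k \<otimes> x" using cancel xc kc by simp
      show "s * (ind (x \<otimes> k) z - ind (c \<otimes> (x \<otimes> k)) z) = s * (ind (k \<otimes> x) z - ind (c \<otimes> (k \<otimes> x)) z)"
        unfolding e2 e1[symmetric] by (rule neg_swap[OF R2_neg_self[OF s]])
    qed
  qed
  have K3: "\<forall>x\<in>SS. \<forall>y\<in>SS. \<forall>s\<in>(R2::'r set). \<forall>t\<in>R2. \<forall>z. s * t * ind (x \<otimes> y) z = s * t * ind (y \<otimes> x) z"
  proof (intro ballI allI)
    fix x y s t z assume x: "x \<in> SS" and y: "y \<in> SS" and s: "s \<in> (R2::'r set)" and t: "t \<in> (R2::'r set)"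
    show "s * t * ind (x \<otimes> y) z = s * t * ind (y \<otimes> x) z"
    proof (cases "s * t = 0")
      case True then show ?thesis by simp
    next
      case False then have "x \<otimes> y = y \<otimes> x" using Sc s t x y by blast
      then show ?thesis by simp
    qed
  qed
  show ?thesis using K1 K2 K3 by blast
qed

end

context invo
begin

lemma S_comm_from_K3:
  assumes K3: "\<forall>x\<in>SS. \<forall>y\<in>SS. \<forall>s\<in>(R2::'r::comm_ring_1 set). \<forall>t\<in>R2. \<forall>z. s * t * ind (x \<otimes> y) z = s * t * ind (y \<otimes> x) z"
    and r: "\<exists>r1\<in>(R2::'r set). \<exists>r2\<in>R2. r1 * r2 \<noteq> 0"
  shows "\<forall>a\<in>SS. \<forall>b\<in>SS. a \<otimes> b = b \<otimes> a"
proof (intro ballI)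
  fix a b assume a: "a \<in> SS" and b: "b \<in> SS"
  obtain r1 r2 where r12: "r1 \<in> (R2::'r set)" "r2 \<in> R2" "r1 * r2 \<noteq> 0" using r by auto
  have "r1 * r2 * ind (a \<otimes> b) (a \<otimes> b) = r1 * r2 * ind (b \<otimes> a) (a \<otimes> b)"
    using K3 a b r12 by blast
  then show "a \<otimes> b = b \<otimes> a" using r12(3) unfolding ind_def by (auto split: if_splits)
qed

lemma dirF:
  assumes two: "(2::'r::comm_ring_1) \<noteq> 0" and three: "(3::'r) \<noteq> 0" and R2ne: "(R2::'r set) \<noteq> {0}"
    and ncomm: "\<not> comm_group G"
    and K: "(\<forall>g\<in>NN. \<forall>h\<in>NN. \<forall>z. ind (g \<otimes> h) z - ind (g \<otimes> \<phi> h) z - ind (\<phi> g \<otimes> h) z + ind (\<phi> g \<otimes> \<phi> h) z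
        = (ind (h \<otimes> g) z - ind (h \<otimes> \<phi> g) z - ind (\<phi> h \<otimes> g) z + ind (\<phi> h \<otimes> \<phi> g) z :: 'r))
   \<and> (\<forall>x\<in>SS. \<forall>k\<in>NN. \<forall>s\<in>(R2::'r set). \<forall>z. s * (ind (x \<otimes> k) z - ind (x \<otimes> \<phi> k) z)
        = s * (ind (k \<otimes> x) z - ind (\<phi> k \<otimes> x) z))
   \<and> (\<forall>x\<in>SS. \<forall>y\<in>SS. \<forall>s\<in>(R2::'r set). \<forall>t\<in>R2. \<forall>z. s * t * ind (x \<otimes> y) z = s * t * ind (y \<otimes> x) z)"
  shows "((\<forall>a\<in>generate G NN. \<forall>b\<in>generate G NN. a \<otimes> b = b \<otimes> a) \<and> (\<forall>r1\<in>(R2::'r set). \<forall>r2\<in>R2. r1 * r2 = 0))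
    \<or> (CHAR('r) = 4 \<and> card (derived G (carrier G)) = 2
       \<and> (\<forall>g\<in>carrier G. derived G (carrier G) #> \<phi> g = derived G (carrier G) #> g)
       \<and> (\<forall>g\<in>carrier G. g \<otimes> g \<in> SS)
       \<and> ((\<exists>r1\<in>(R2::'r set). \<exists>r2\<in>R2. r1 * r2 \<noteq> 0) \<longrightarrow> (\<forall>a\<in>SS. \<forall>b\<in>SS. a \<otimes> b = b \<otimes> a)))"
proof -
  have K1: "\<And>g h z. g \<in> NN \<Longrightarrow> h \<in> NN \<Longrightarrow> ind (g \<otimes> h) z - ind (g \<otimes> \<phi> h) z - ind (\<phi> g \<otimes> h) z + ind (\<phi> g \<otimes> \<phi> h) z
        = (ind (h \<otimes> g) z - ind (h \<otimes> \<phi> g) z - ind (\<phi> h \<otimes> g) z + ind (\<phi> h \<otimes> \<phi> g) z :: 'r)"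
    using K by blast
  have K2: "\<forall>x\<in>SS. \<forall>k\<in>NN. \<forall>s\<in>(R2::'r set). \<forall>z. s * (ind (x \<otimes> k) z - ind (x \<otimes> \<phi> k) z)
        = s * (ind (k \<otimes> x) z - ind (\<phi> k \<otimes> x) z)" using K by blast
  have K3: "\<forall>x\<in>SS. \<forall>y\<in>SS. \<forall>s\<in>(R2::'r set). \<forall>t\<in>R2. \<forall>z. s * t * ind (x \<otimes> y) z = s * t * ind (y \<otimes> x) z"
    using K by blast
  have "0 \<in> (R2::'r set)" unfolding R2_def by simp
  then obtain s0 :: 'r where s0: "s0 \<in> R2" "s0 \<noteq> 0" using R2ne by blast
  have H2: "\<And>x k. x \<in> SS \<Longrightarrow> k \<in> NN \<Longrightarrow> x \<otimes> k = k \<otimes> x \<or> (x \<otimes> k = \<phi> k \<otimes> x \<and> x \<otimes> \<phi> k = k \<otimes> x)"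
  proof -
    fix x k assume x: "x \<in> SS" and k: "k \<in> NN"
    show "x \<otimes> k = k \<otimes> x \<or> (x \<otimes> k = \<phi> k \<otimes> x \<and> x \<otimes> \<phi> k = k \<otimes> x)"
      by (rule H2_from_K2[OF s0 x k]) (use K2 x k s0 in blast)
  qed
  have Sc: "(\<exists>r1\<in>(R2::'r set). \<exists>r2\<in>R2. r1 * r2 \<noteq> 0) \<longrightarrow> (\<forall>a\<in>SS. \<forall>b\<in>SS. a \<otimes> b = b \<otimes> a)"
    using S_comm_from_K3[OF K3] by blast
  have NC: "NN \<subseteq> carrier G" unfolding NN_def by auto
  have NK: "NN \<subseteq> generate G NN" by (rule subsetI) (rule generate.incl)
  have sK: "subgroup (generate G NN) G" using generate_is_subgroup[OF NC] .
  show ?thesis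
  proof (cases "\<forall>g\<in>NN. \<forall>h\<in>NN. g \<otimes> h = h \<otimes> g")
    case True
    have Kab: "\<forall>a\<in>generate G NN. \<forall>b\<in>generate G NN. a \<otimes> b = b \<otimes> a"
      using gen_comm[OF NC True] by blast
    have R0: "\<forall>r1\<in>(R2::'r set). \<forall>r2\<in>R2. r1 * r2 = 0"
    proof (rule ccontr)
      assume "\<not> ?thesis"
      then have SC: "\<forall>a\<in>SS. \<forall>b\<in>SS. a \<otimes> b = b \<otimes> a" using Sc by blast
      have out: "x \<otimes> k = k \<otimes> x" if x: "x \<in> carrier G" "x \<notin> generate G NN" and k: "k \<in> carrier G" for x k
      proof -
        have xS: "x \<in> SS" using x NK SS_iff by auto
        show ?thesis
        proof (cases "k \<in> NN")
          case False then have "k \<in> SS" using k SS_iff by auto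
          then show ?thesis using SC xS by blast
        next
          case True
          have "x \<otimes> k \<notin> generate G NN"
          proof
            assume a: "x \<otimes> k \<in> generate G NN"
            have "(x \<otimes> k) \<otimes> inv k \<in> generate G NN"
              using subgroup.m_closed[OF sK a subgroup.m_inv_closed[OF sK]] True NK by auto
            then show False using x k by (simp add: m_assoc)
          qed
          then have "x \<otimes> k \<in> SS" using x k NK SS_iff by auto
          then have "x \<otimes> (x \<otimes> k) = (x \<otimes> k) \<otimes> x" using SC xS by blast
          then have "x \<otimes> (x \<otimes> k) = x \<otimes> (k \<otimes> x)" using x k by (simp add: m_assoc)
          then show ?thesis using x k by simp
        qed
      qed
      have "comm_group G"
      proof (rule group_comm_groupI)
        fix a b assume a: "a \<in> carrier G" and b: "b \<in> carrier G"
        show "a \<otimes> b = b \<otimes> a"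
        proof (cases "a \<in> generate G NN")
          case False then show ?thesis using out a b by blast
        next
          case aK: True
          show ?thesis
          proof (cases "b \<in> generate G NN")
            case False then show ?thesis using out a b by metis
          next
            case True then show ?thesis using Kab aK by blast
          qed
        qed
      qed
      then show False using ncomm by simp
    qed
    show ?thesis using Kab R0 by blast
  next
    case False
    then obtain g0 h0 where g0: "g0 \<in> NN" and h0: "h0 \<in> NN" and nc0: "g0 \<otimes> h0 \<noteq> h0 \<otimes> g0" by blast
    have HP: "\<And>g h. g \<in> NN \<Longrightarrow> h \<in> NN \<Longrightarrow> g \<otimes> h \<noteq> h \<otimes> g \<Longrightarrow> pairP g h"
      using pair_from_K1[OF two three H2] K1 by blast
    have four: "(4::'r) = 0" using pair_from_K1[OF two three H2 g0 h0 nc0] K1[OF g0 h0] by blast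
    have C4: "CHAR('r) = 4" using char4[OF two three four] .
    interpret gl: invo_glob G \<phi> g0 h0
      by (unfold_locales) (use HP H2 g0 h0 nc0 in auto)
    show ?thesis using C4 gl.derived_card gl.cosets gl.squares Sc by blast
  qed
qed

end

theorem theorem2p5:
  fixes G :: "('g, 'b) monoid_scheme" and \<phi> :: "'g \<Rightarrow> 'g"
  assumes "CHAR('r::comm_ring_1) \<noteq> 2"
    and "(R2 :: 'r set) \<noteq> {0}"
    and "group G"
    and "\<not> comm_group G"
    and "grp_involution G \<phi>"
  shows "(\<forall>\<alpha> \<in> (skew_elems G \<phi> :: ('g \<Rightarrow> 'r) set). \<forall>\<beta> \<in> skew_elems G \<phi>.
            grp_ring_mult G \<alpha> \<beta> = grp_ring_mult G \<beta> \<alpha>)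
    \<longleftrightarrow>
    ((\<forall>a \<in> generate G {g \<in> carrier G. g \<notin> fixed_set G \<phi>}.
        \<forall>b \<in> generate G {g \<in> carrier G. g \<notin> fixed_set G \<phi>}. a \<otimes>\<^bsub>G\<^esub> b = b \<otimes>\<^bsub>G\<^esub> a)
      \<and> (\<forall>r1 \<in> (R2 :: 'r set). \<forall>r2 \<in> R2. r1 * r2 = 0))
    \<or>
    (CHAR('r) = 4
      \<and> card (derived G (carrier G)) = 2
      \<and> (\<forall>g \<in> carrier G. derived G (carrier G) #>\<^bsub>G\<^esub> \<phi> g = derived G (carrier G) #>\<^bsub>G\<^esub> g)
      \<and> (\<forall>g \<in> carrier G. g \<otimes>\<^bsub>G\<^esub> g \<in> fixed_set G \<phi>)
      \<and> ((\<exists>r1 \<in> (R2 :: 'r set). \<exists>r2 \<in> R2. r1 * r2 \<noteq> 0) \<longrightarrow>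
           (\<forall>a \<in> fixed_set G \<phi>. \<forall>b \<in> fixed_set G \<phi>. a \<otimes>\<^bsub>G\<^esub> b = b \<otimes>\<^bsub>G\<^esub> a)))"
proof -
  interpret invo G \<phi> using assms(3,5) by (simp add: invo_def invo_axioms_def)
  have two: "(2::'r) \<noteq> 0" using two_ne[OF assms(1)] .
  have three: "(3::'r) \<noteq> 0" using three_ne[OF assms(2)] .
  show ?thesis
    unfolding NN_eq comm_iff
    apply (rule iffI)
     apply (erule dirF[OF two three assms(2) assms(4)])
    apply (elim disjE conjE)
     apply (rule dirA; assumption)
    apply (rule dirB; assumption)
    done
qed

end
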